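(* Let $\Lambda$ be the double of a cellular decomposition of a compact oriented surface without boundary, with a discrete conformal structure $\rho$. For each pair of vertices $x,x'\in\Lambda_0$ joined by a simple path $\lambda$ in $\Lambda$ from $x$ to $x'$, there exists a unique pair of meromorphic $1$-forms $\alpha_{x,x'},\beta_{x,x'}$ on $\Lambda$ whose only poles are at $x$ and $x'$, with residues $+1$ at $x$ and $-1$ at $x'$, such that $\alpha_{x,x'}$ has purely imaginary holonomies and $\beta_{x,x'}$ has real holonomies along every loop in $\Lambda$ none of whose edges is dual to an edge of $\lambda$.
   Context: $\Lambda=\Gamma\sqcup\Gamma^*$ with $\Gamma$ a cellular decomposition and $\Gamma^*$ its Poincaré dual (dual edge $e^*$ for each edge $e$, dual face $v^*$ for each vertex $v$, $e^{**}=-e$); $\rho:\Lambda_1\to(0,\infty)$ with $\rho(e)\rho(e^* )=1$. Hodge star on 1-forms: $\int_e*\alpha=-\rho(e^* )\int_{e^*}\alpha$. A 1-form $\alpha$ is of type $(1,0)$ if $*\alpha=-i\alpha$. It is meromorphic with poles at a set of vertices if it is of type $(1,0)$, closed on every face $v^*$ of $\Lambda$ for $v$ not a pole, and not closed on $v^*$ for $v$ a pole; its residue at $v$ is $\mathrm{Res}_v(\alpha)=\frac{1}{2i\pi}\oint_{\partial v^*}\alpha$. The holonomy along a loop (closed edge-path) $\gamma$ is $\int_\gamma\alpha$. *)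

theory Defs
  imports Complex_Main
begin

text \<open>Combinatorial model of a cellular decomposition Gamma of a compact connected
oriented surface without boundary: a combinatorial map on a finite set D of darts
(oriented edges), with a fixed-point-free involution iota (edge reversal) and a
permutation sigma (counterclockwise rotation of darts around their tail vertex).
Vertices are sigma-orbits, faces are orbits of sigma o iota; the face of d is the
face lying to the right of d.\<close>

definition orb :: "('d \<Rightarrow> 'd) \<Rightarrow> 'd \<Rightarrow> 'd set" where
  "orb f d = {(f ^^ n) d | n. True}"

definition comb_map :: "'d set \<Rightarrow> ('d \<Rightarrow> 'd) \<Rightarrow> ('d \<Rightarrow> 'd) \<Rightarrow> bool" where
  "comb_map D \<sigma> \<iota> \<longleftrightarrow> finite D \<and> D \<noteq> {} \<and> bij_betw \<sigma> D D \<and> bij_betw \<iota> D D \<and>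
     (\<forall>d\<in>D. \<iota> (\<iota> d) = d \<and> \<iota> d \<noteq> d) \<and>
     (\<forall>d\<in>D. \<forall>d'\<in>D. (d, d') \<in> {(a, b). b = \<sigma> a \<or> b = \<iota> a}\<^sup>*)"

text \<open>Oriented edges of the double Lambda = Gamma + Gamma*: a primal dart, or the
dual dart d* of a primal dart d, which crosses d from its right to its left.\<close>

datatype 'd ldart = Prim 'd | Dual 'd

definition ldarts :: "'d set \<Rightarrow> 'd ldart set" where
  "ldarts D = Prim ` D \<union> Dual ` D"

text \<open>Vertices of Lambda: Inl v for vertices of Gamma, Inr f for faces of Gamma
(= vertices of Gamma*).\<close>

definition lverts :: "'d set \<Rightarrow> ('d \<Rightarrow> 'd) \<Rightarrow> ('d \<Rightarrow> 'd) \<Rightarrow> ('d set + 'd set) set" where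
  "lverts D \<sigma> \<iota> = (\<lambda>d. Inl (orb \<sigma> d)) ` D \<union> (\<lambda>d. Inr (orb (\<sigma> \<circ> \<iota>) d)) ` D"

fun lrev :: "('d \<Rightarrow> 'd) \<Rightarrow> 'd ldart \<Rightarrow> 'd ldart" where
  "lrev \<iota> (Prim d) = Prim (\<iota> d)"
| "lrev \<iota> (Dual d) = Dual (\<iota> d)"

text \<open>Duality on oriented edges: e \<mapsto> e*, with e** = -e.\<close>

fun lstar :: "('d \<Rightarrow> 'd) \<Rightarrow> 'd ldart \<Rightarrow> 'd ldart" where
  "lstar \<iota> (Prim d) = Dual d"
| "lstar \<iota> (Dual d) = Prim (\<iota> d)"

fun ltail :: "('d \<Rightarrow> 'd) \<Rightarrow> ('d \<Rightarrow> 'd) \<Rightarrow> 'd ldart \<Rightarrow> 'd set + 'd set" where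
  "ltail \<sigma> \<iota> (Prim d) = Inl (orb \<sigma> d)"
| "ltail \<sigma> \<iota> (Dual d) = Inr (orb (\<sigma> \<circ> \<iota>) d)"

definition lhead :: "('d \<Rightarrow> 'd) \<Rightarrow> ('d \<Rightarrow> 'd) \<Rightarrow> 'd ldart \<Rightarrow> 'd set + 'd set" where
  "lhead \<sigma> \<iota> x = ltail \<sigma> \<iota> (lrev \<iota> x)"

definition conf_struct :: "'d set \<Rightarrow> ('d \<Rightarrow> 'd) \<Rightarrow> ('d ldart \<Rightarrow> real) \<Rightarrow> bool" where
  "conf_struct D \<iota> \<rho> \<longleftrightarrow> (\<forall>x\<in>ldarts D. \<rho> x > 0 \<and> \<rho> (lrev \<iota> x) = \<rho> x \<and>
      \<rho> x * \<rho> (lstar \<iota> x) = 1)"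

text \<open>1-forms: antisymmetric complex functions on oriented edges of Lambda
(value 0 off the carrier, for extensionality).\<close>

definition one_form :: "'d set \<Rightarrow> ('d \<Rightarrow> 'd) \<Rightarrow> ('d ldart \<Rightarrow> complex) \<Rightarrow> bool" where
  "one_form D \<iota> \<alpha> \<longleftrightarrow> (\<forall>x\<in>ldarts D. \<alpha> (lrev \<iota> x) = - \<alpha> x) \<and> (\<forall>x. x \<notin> ldarts D \<longrightarrow> \<alpha> x = 0)"

definition hodge :: "('d \<Rightarrow> 'd) \<Rightarrow> ('d ldart \<Rightarrow> real) \<Rightarrow> ('d ldart \<Rightarrow> complex) \<Rightarrow> 'd ldart \<Rightarrow> complex" where
  "hodge \<iota> \<rho> \<alpha> x = - complex_of_real (\<rho> (lstar \<iota> x)) * \<alpha> (lstar \<iota> x)"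

definition type10 :: "'d set \<Rightarrow> ('d \<Rightarrow> 'd) \<Rightarrow> ('d ldart \<Rightarrow> real) \<Rightarrow> ('d ldart \<Rightarrow> complex) \<Rightarrow> bool" where
  "type10 D \<iota> \<rho> \<alpha> \<longleftrightarrow> (\<forall>x\<in>ldarts D. hodge \<iota> \<rho> \<alpha> x = - \<i> * \<alpha> x)"

text \<open>Integral of alpha over the positively oriented boundary of the face u* of Lambda
dual to the vertex u: sum of alpha(e*) over the oriented edges e of Lambda leaving u.\<close>

definition face_int :: "'d set \<Rightarrow> ('d \<Rightarrow> 'd) \<Rightarrow> ('d \<Rightarrow> 'd) \<Rightarrow> ('d ldart \<Rightarrow> complex)
     \<Rightarrow> 'd set + 'd set \<Rightarrow> complex" where
  "face_int D \<sigma> \<iota> \<alpha> u = (\<Sum>x\<in>{x\<in>ldarts D. ltail \<sigma> \<iota> x = u}. \<alpha> (lstar \<iota> x))"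

definition residue :: "'d set \<Rightarrow> ('d \<Rightarrow> 'd) \<Rightarrow> ('d \<Rightarrow> 'd) \<Rightarrow> ('d ldart \<Rightarrow> complex)
     \<Rightarrow> 'd set + 'd set \<Rightarrow> complex" where
  "residue D \<sigma> \<iota> \<alpha> u = face_int D \<sigma> \<iota> \<alpha> u / (2 * \<i> * complex_of_real pi)"

definition meromorphic :: "'d set \<Rightarrow> ('d \<Rightarrow> 'd) \<Rightarrow> ('d \<Rightarrow> 'd) \<Rightarrow> ('d ldart \<Rightarrow> real)
     \<Rightarrow> ('d set + 'd set) set \<Rightarrow> ('d ldart \<Rightarrow> complex) \<Rightarrow> bool" where
  "meromorphic D \<sigma> \<iota> \<rho> P \<alpha> \<longleftrightarrow> one_form D \<iota> \<alpha> \<and> type10 D \<iota> \<rho> \<alpha> \<and>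
     (\<forall>u\<in>lverts D \<sigma> \<iota> - P. face_int D \<sigma> \<iota> \<alpha> u = 0) \<and>
     (\<forall>u\<in>P. face_int D \<sigma> \<iota> \<alpha> u \<noteq> 0)"

fun is_chain :: "('d \<Rightarrow> 'd) \<Rightarrow> ('d \<Rightarrow> 'd) \<Rightarrow> 'd ldart list \<Rightarrow> bool" where
  "is_chain \<sigma> \<iota> [] = True"
| "is_chain \<sigma> \<iota> [y] = True"
| "is_chain \<sigma> \<iota> (y # z # zs) = (lhead \<sigma> \<iota> y = ltail \<sigma> \<iota> z \<and> is_chain \<sigma> \<iota> (z # zs))"

definition is_path :: "'d set \<Rightarrow> ('d \<Rightarrow> 'd) \<Rightarrow> ('d \<Rightarrow> 'd) \<Rightarrow> 'd ldart list
     \<Rightarrow> 'd set + 'd set \<Rightarrow> 'd set + 'd set \<Rightarrow> bool" where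
  "is_path D \<sigma> \<iota> xs u v \<longleftrightarrow> xs \<noteq> [] \<and> set xs \<subseteq> ldarts D \<and> is_chain \<sigma> \<iota> xs \<and>
     ltail \<sigma> \<iota> (hd xs) = u \<and> lhead \<sigma> \<iota> (last xs) = v"

definition simple_path :: "'d set \<Rightarrow> ('d \<Rightarrow> 'd) \<Rightarrow> ('d \<Rightarrow> 'd) \<Rightarrow> 'd ldart list
     \<Rightarrow> 'd set + 'd set \<Rightarrow> 'd set + 'd set \<Rightarrow> bool" where
  "simple_path D \<sigma> \<iota> xs u v \<longleftrightarrow> is_path D \<sigma> \<iota> xs u v \<and>
     distinct (map (ltail \<sigma> \<iota>) xs @ [v])"

definition is_loop :: "'d set \<Rightarrow> ('d \<Rightarrow> 'd) \<Rightarrow> ('d \<Rightarrow> 'd) \<Rightarrow> 'd ldart list \<Rightarrow> bool" where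
  "is_loop D \<sigma> \<iota> xs \<longleftrightarrow> (\<exists>u. is_path D \<sigma> \<iota> xs u u)"

definition holonomy :: "('d ldart \<Rightarrow> complex) \<Rightarrow> 'd ldart list \<Rightarrow> complex" where
  "holonomy \<alpha> xs = sum_list (map \<alpha> xs)"

definition avoids_dual :: "('d \<Rightarrow> 'd) \<Rightarrow> 'd ldart list \<Rightarrow> 'd ldart list \<Rightarrow> bool" where
  "avoids_dual \<iota> \<gamma> lam \<longleftrightarrow>
     (\<forall>y\<in>set \<gamma>. \<forall>z\<in>set lam. y \<noteq> lstar \<iota> z \<and> y \<noteq> lrev \<iota> (lstar \<iota> z))"

end

theory Submission
  imports Defs
begin

lemma cm_fin: "comb_map D \<sigma> \<iota> \<Longrightarrow> finite D" by (simp add: comb_map_def)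
lemma cm_iota: "comb_map D \<sigma> \<iota> \<Longrightarrow> d \<in> D \<Longrightarrow> \<iota> d \<in> D \<and> \<iota> (\<iota> d) = d \<and> \<iota> d \<noteq> d"
  unfolding comb_map_def bij_betw_def by auto
lemma cm_sigma: "comb_map D \<sigma> \<iota> \<Longrightarrow> d \<in> D \<Longrightarrow> \<sigma> d \<in> D"
  unfolding comb_map_def bij_betw_def by auto
lemma cm_bij_sigma: "comb_map D \<sigma> \<iota> \<Longrightarrow> bij_betw \<sigma> D D" by (simp add: comb_map_def)
lemma cm_bij_iota: "comb_map D \<sigma> \<iota> \<Longrightarrow> bij_betw \<iota> D D" by (simp add: comb_map_def)
lemma cm_bij_si: "comb_map D \<sigma> \<iota> \<Longrightarrow> bij_betw (\<sigma> \<circ> \<iota>) D D"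
  using cm_bij_sigma cm_bij_iota bij_betw_trans by blast

lemma funpow_in: "f ` D \<subseteq> D \<Longrightarrow> d \<in> D \<Longrightarrow> (f ^^ n) d \<in> D"
  by (induction n) auto

lemma funpow_inj_cancel:
  assumes "inj_on f D" "f ` D \<subseteq> D" "a \<in> D" "b \<in> D" "(f ^^ i) a = (f ^^ i) b"
  shows "a = b"
  using assms(5)
proof (induction i)
  case 0 then show ?case by simp
next
  case (Suc i)
  have "(f ^^ i) a \<in> D" "(f ^^ i) b \<in> D" using funpow_in assms by metis+
  then have "(f ^^ i) a = (f ^^ i) b" using Suc.prems assms(1) by (auto dest: inj_onD)
  then show ?case using Suc.IH by blast
qed

lemma perm_period:
  assumes "finite D" "bij_betw f D D" "d \<in> D"
  shows "\<exists>p>0. (f ^^ p) d = d"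
proof -
  have sub: "f ` D \<subseteq> D" using assms(2) by (simp add: bij_betw_def)
  have inj: "inj_on f D" using assms(2) by (simp add: bij_betw_def)
  have "\<not> inj_on (\<lambda>n. (f ^^ n) d) {0..card D}"
  proof
    assume "inj_on (\<lambda>n. (f ^^ n) d) {0..card D}"
    moreover have "(\<lambda>n. (f ^^ n) d) ` {0..card D} \<subseteq> D" using funpow_in[OF sub assms(3)] by auto
    ultimately have "card {0..card D} \<le> card D" using card_inj_on_le assms(1) by blast
    then show False by simp
  qed
  then obtain i j where ij: "i \<noteq> j" "(f ^^ i) d = (f ^^ j) d"
    unfolding inj_on_def by blast
  have key: "\<exists>p>0. (f ^^ p) d = d" if "i < j" "(f ^^ i) d = (f ^^ j) d" for i j
  proof -
    have "j = i + (j - i)" using that(1) by simp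
    then have "(f ^^ j) d = (f ^^ i) ((f ^^ (j - i)) d)"
      by (metis funpow_add comp_apply)
    then have "(f ^^ i) ((f ^^ (j - i)) d) = (f ^^ i) d" using that(2) by simp
    then have "(f ^^ (j - i)) d = d"
      using funpow_inj_cancel[OF inj sub _ assms(3)] funpow_in[OF sub assms(3)] by blast
    then show ?thesis using that(1) by (intro exI[of _ "j - i"]) auto
  qed
  show ?thesis
  proof (cases "i < j")
    case True then show ?thesis using key ij by blast
  next
    case False then have "j < i" using ij(1) by simp
    then show ?thesis using key ij(2) by metis
  qed
qed

lemma orb_step:
  assumes "finite D" "bij_betw f D D" "d \<in> D"
  shows "orb f (f d) = orb f d"
proof -
  obtain p where p: "p > 0" "(f ^^ p) d = d" using perm_period[OF assms] by blast
  have A: "(f ^^ n) (f d) = (f ^^ Suc n) d" for n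
    by (metis comp_apply funpow_Suc_right)
  have B: "(f ^^ n) d = (f ^^ (n + p - 1)) (f d)" for n
  proof -
    have "(f ^^ (n + p - 1)) (f d) = (f ^^ Suc (n + p - 1)) d" by (rule A)
    also have "Suc (n + p - 1) = n + p" using p(1) by simp
    also have "(f ^^ (n + p)) d = (f ^^ n) ((f ^^ p) d)" by (simp only: funpow_add comp_apply)
    finally show ?thesis using p(2) by simp
  qed
  show ?thesis
  proof
    show "orb f (f d) \<subseteq> orb f d" unfolding orb_def using A by blast
    show "orb f d \<subseteq> orb f (f d)" unfolding orb_def using B by blast
  qed
qed

lemma orb_cong:
  assumes "\<forall>d\<in>D. f d = g d" "g ` D \<subseteq> D" "d \<in> D"
  shows "orb f d = orb g d"
proof -
  have "(f ^^ n) d = (g ^^ n) d" for n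
  proof (induction n)
    case (Suc n)
    have "(g ^^ n) d \<in> D" using funpow_in[OF assms(2,3)] .
    then have "f ((g ^^ n) d) = g ((g ^^ n) d)" using assms(1) by blast
    then show ?case using Suc.IH by simp
  qed simp
  then show ?thesis unfolding orb_def by simp
qed

context
  fixes D \<sigma> \<iota>
  assumes cm: "comb_map D \<sigma> \<iota>"
begin

lemma pi_sig: "d \<in> D \<Longrightarrow> orb \<sigma> (\<sigma> d) = orb \<sigma> d"
  by (rule orb_step[OF cm_fin[OF cm] cm_bij_sigma[OF cm]])

lemma phi_si: "d \<in> D \<Longrightarrow> orb (\<sigma> \<circ> \<iota>) (\<sigma> (\<iota> d)) = orb (\<sigma> \<circ> \<iota>) d"
  using orb_step[OF cm_fin[OF cm] cm_bij_si[OF cm], of d] by simp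

lemma phi_iota: "d \<in> D \<Longrightarrow> orb (\<sigma> \<circ> \<iota>) (\<iota> d) = orb (\<sigma> \<circ> \<iota>) (\<sigma> d)"
  using phi_si[of "\<iota> d"] cm_iota[OF cm] by simp

end


lemma reach_first_step:
  assumes "(a, u) \<in> {(a, b). a \<in> V \<and> b \<in> V \<and> C a b > (0::real)}\<^sup>*" "a = w" "u \<noteq> w"
  shows "\<exists>b\<in>V. b \<noteq> w \<and> C w b > 0"
  using assms
proof (induction rule: converse_rtrancl_induct)
  case base then show ?case by simp
next
  case (step y z)
  then show ?case by (cases "z = w") auto
qed

lemma lap_vertex_n:
  fixes C :: "'v \<Rightarrow> 'v \<Rightarrow> real"
  assumes "card V = n" "finite V"
    and "\<forall>u\<in>V. \<forall>v\<in>V. C u v = C v u"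
    and "\<forall>u\<in>V. \<forall>v\<in>V. C u v \<ge> 0"
    and "\<forall>u\<in>V. \<forall>v\<in>V. (u, v) \<in> {(a, b). a \<in> V \<and> b \<in> V \<and> C a b > 0}\<^sup>*"
    and "(\<Sum>u\<in>V. s u) = 0"
  shows "\<exists>f. \<forall>u\<in>V. (\<Sum>v\<in>V. C u v * (f v - f u)) = s u"
  using assms
proof (induction n arbitrary: V C s)
  case 0
  then have "V = {}" by simp
  then show ?case by simp
next
  case (Suc n)
  then have "V \<noteq> {}" by auto
  then obtain w where w: "w \<in> V" by blast
  define V' where "V' = V - {w}"
  have V: "V = insert w V'" "w \<notin> V'" "finite V'" using w Suc.prems(2) unfolding V'_def by auto
  have cardV': "card V' = n" using V Suc.prems(1) by (metis card_insert_disjoint diff_Suc_1)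
  show ?case
  proof (cases "n = 0")
    case True
    then have "V' = {}" using cardV' V(3) by simp
    then have "V = {w}" using V by simp
    then have "s w = 0" using Suc.prems(6) by simp
    then show ?thesis using \<open>V = {w}\<close> by simp
  next
    case False
    then obtain u where u: "u \<in> V'" using cardV' by (metis card.empty ex_in_conv)
    then have "u \<noteq> w" "u \<in> V" using V by auto
    obtain b where b: "b \<in> V" "b \<noteq> w" "C w b > 0"
      using reach_first_step[OF _ refl \<open>u \<noteq> w\<close>] Suc.prems(5) w \<open>u \<in> V\<close> by blast
    define K where "K = (\<Sum>v\<in>V'. C w v)"
    have "b \<in> V'" using b V by auto
    have "C w b \<le> K" unfolding K_def
      by (rule member_le_sum) (use \<open>b \<in> V'\<close> Suc.prems(4) V w in auto)
    then have Kpos: "K > 0" using b by simp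
    define C' where "C' = (\<lambda>u v. C u v + C u w * C w v / K)"
    define s' where "s' = (\<lambda>u. s u + C u w * s w / K)"
    have symC: "\<And>u v. u \<in> V \<Longrightarrow> v \<in> V \<Longrightarrow> C u v = C v u" using Suc.prems(3) by blast
    have nnC: "\<And>u v. u \<in> V \<Longrightarrow> v \<in> V \<Longrightarrow> C u v \<ge> 0" using Suc.prems(4) by blast
    have nnC': "C' u v \<ge> C u v" if "u \<in> V" "v \<in> V" for u v
      using nnC[OF that(1) w] nnC[OF w that(2)] Kpos unfolding C'_def by simp
    have h1: "\<forall>u\<in>V'. \<forall>v\<in>V'. C' u v = C' v u"
      unfolding C'_def using symC V w by (auto simp: mult.commute)
    have h2: "\<forall>u\<in>V'. \<forall>v\<in>V'. C' u v \<ge> 0"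
      using nnC' nnC V by (meson insertCI order_trans)
    have h4: "(\<Sum>u\<in>V'. s' u) = 0"
    proof -
      have "(\<Sum>u\<in>V'. s' u) = (\<Sum>u\<in>V'. s u) + (\<Sum>u\<in>V'. C u w) * s w / K"
        unfolding s'_def by (simp add: sum.distrib sum_distrib_right sum_divide_distrib)
      also have "(\<Sum>u\<in>V'. C u w) = K" unfolding K_def
        by (rule sum.cong) (use symC V w in auto)
      also have "(\<Sum>u\<in>V'. s u) + K * s w / K = (\<Sum>u\<in>V. s u)"
        using Kpos V by simp
      finally show ?thesis using Suc.prems(6) by simp
    qed
    let ?R = "{(a, b). a \<in> V \<and> b \<in> V \<and> C a b > 0}"
    let ?R' = "{(a, b). a \<in> V' \<and> b \<in> V' \<and> C' a b > 0}"
    have conn: "(a \<noteq> w \<longrightarrow> (a, v) \<in> ?R'\<^sup>*) \<and> (a = w \<longrightarrow> (\<exists>u'\<in>V'. C w u' > 0 \<and> (u', v) \<in> ?R'\<^sup>*))"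
      if "(a, v) \<in> ?R\<^sup>*" "v \<in> V'" for a v
      using that(1)
    proof (induction rule: converse_rtrancl_induct)
      case base then show ?case using that(2) V by auto
    next
      case (step y z)
      then have yz: "y \<in> V" "z \<in> V" "C y z > 0" by auto
      show ?case
      proof (cases "y = w")
        case True
        show ?thesis
        proof (cases "z = w")
          case True then show ?thesis using step.IH \<open>y = w\<close> by simp
        next
          case False then show ?thesis using step.IH \<open>y = w\<close> yz V by auto
        qed
      next
        case yw: False
        show ?thesis
        proof (cases "z = w")
          case True
          then obtain u' where u': "u' \<in> V'" "C w u' > 0" "(u', v) \<in> ?R'\<^sup>*" using step.IH by blast
          have "u' \<in> V" using u' V by auto
          have "C y w > 0" using yz True by simp
          then have "C y w * C w u' / K > 0" using u'(2) Kpos by simp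
          moreover have "C y u' \<ge> 0" using nnC[OF yz(1) \<open>u' \<in> V\<close>] .
          ultimately have "C' y u' > 0" unfolding C'_def by simp
          then have "(y, u') \<in> ?R'" using yw yz u' V by auto
          then show ?thesis using u'(3) yw by (meson converse_rtrancl_into_rtrancl)
        next
          case False
          have "C' y z > 0" using nnC'[OF yz(1,2)] yz(3) by simp
          then have "(y, z) \<in> ?R'" using yw False yz V by auto
          then show ?thesis using step.IH False yw by (meson converse_rtrancl_into_rtrancl)
        qed
      qed
    qed
    have h3: "\<forall>u\<in>V'. \<forall>v\<in>V'. (u, v) \<in> ?R'\<^sup>*"
    proof (intro ballI)
      fix u v assume "u \<in> V'" "v \<in> V'"
      then have "(u, v) \<in> ?R\<^sup>*" using Suc.prems(5) V by auto
      then show "(u, v) \<in> ?R'\<^sup>*" using conn \<open>u \<in> V'\<close> \<open>v \<in> V'\<close> V by auto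
    qed
    obtain f' where f': "\<forall>u\<in>V'. (\<Sum>v\<in>V'. C' u v * (f' v - f' u)) = s' u"
      using Suc.IH[OF cardV' V(3) h1 h2 h3 h4] by blast
    define fw where "fw = ((\<Sum>v\<in>V'. C w v * f' v) - s w) / K"
    define f where "f = f'(w := fw)"
    have fV': "\<And>v. v \<in> V' \<Longrightarrow> f v = f' v" using V unfolding f_def by auto
    have "\<forall>u\<in>V. (\<Sum>v\<in>V. C u v * (f v - f u)) = s u"
    proof
      fix u assume "u \<in> V"
      have split: "(\<Sum>v\<in>V. C u v * (f v - f u)) = C u w * (f w - f u) + (\<Sum>v\<in>V'. C u v * (f v - f u))"
        using V by (simp add: sum.insert)
      show "(\<Sum>v\<in>V. C u v * (f v - f u)) = s u"
      proof (cases "u = w")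
        case True
        have "(\<Sum>v\<in>V'. C w v * (f v - f w)) = (\<Sum>v\<in>V'. C w v * f' v - C w v * fw)"
          by (rule sum.cong) (use V(2) in \<open>auto simp: fV' f_def right_diff_distrib\<close>)
        also have "\<dots> = (\<Sum>v\<in>V'. C w v * f' v) - K * fw"
          unfolding K_def by (simp add: sum_subtractf sum_distrib_right)
        also have "\<dots> = s w" unfolding fw_def using Kpos by simp
        finally show ?thesis using split True by simp
      next
        case False
        then have "u \<in> V'" using \<open>u \<in> V\<close> V by auto
        have fu: "f u = f' u" using fV'[OF \<open>u \<in> V'\<close>] .
        define A where "A = (\<Sum>v\<in>V'. C u v * (f' v - f' u))"
        define Bf where "Bf = (\<Sum>v\<in>V'. C w v * f' v)"
        have B: "(\<Sum>v\<in>V'. C w v * (f' v - f' u)) = Bf - K * f' u"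
          unfolding Bf_def K_def by (simp add: algebra_simps sum_subtractf sum_distrib_left)
        have "(\<Sum>v\<in>V'. C' u v * (f' v - f' u)) = (\<Sum>v\<in>V'. C u v * (f' v - f' u) + C u w / K * (C w v * (f' v - f' u)))"
          by (rule sum.cong) (simp_all add: C'_def field_simps)
        also have "\<dots> = A + C u w / K * (\<Sum>v\<in>V'. C w v * (f' v - f' u))"
          unfolding A_def by (simp add: sum.distrib sum_distrib_left)
        finally have "(\<Sum>v\<in>V'. C' u v * (f' v - f' u)) = A + C u w / K * (\<Sum>v\<in>V'. C w v * (f' v - f' u))" .
        then have e1: "A + C u w / K * (Bf - K * f' u) = s u + C u w * s w / K"
          using f' \<open>u \<in> V'\<close> B unfolding s'_def by simp
        have "(\<Sum>v\<in>V. C u v * (f v - f u)) = C u w * (fw - f' u) + A"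
          using split fu fV' unfolding A_def f_def by (simp add: V(2))
        also have "\<dots> = s u"
        proof -
          have "C u w * (fw - f' u) = C u w / K * (Bf - K * f' u) - C u w * s w / K"
            unfolding fw_def Bf_def using Kpos by (simp add: field_simps)
          then show ?thesis using e1 by simp
        qed
        finally show ?thesis .
      qed
    qed
    then show ?thesis by blast
  qed
qed


lemma lap_vertex:
  fixes C :: "'v \<Rightarrow> 'v \<Rightarrow> real"
  assumes "finite V"
    and "\<forall>u\<in>V. \<forall>v\<in>V. C u v = C v u"
    and "\<forall>u\<in>V. \<forall>v\<in>V. C u v \<ge> 0"
    and "\<forall>u\<in>V. \<forall>v\<in>V. (u, v) \<in> {(a, b). a \<in> V \<and> b \<in> V \<and> C a b > 0}\<^sup>*"
    and "(\<Sum>u\<in>V. s u) = 0"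
  shows "\<exists>f. \<forall>u\<in>V. (\<Sum>v\<in>V. C u v * (f v - f u)) = s u"
  using lap_vertex_n[OF refl assms] .

lemma fiber_reindex:
  assumes "bij_betw g D D" "\<forall>d\<in>D. \<pi> (g d) = \<pi> d"
  shows "(\<Sum>d\<in>{d\<in>D. \<pi> d = v}. h (g d)) = (\<Sum>d\<in>{d\<in>D. \<pi> d = v}. h d)"
proof -
  let ?F = "{d\<in>D. \<pi> d = v}"
  have inj: "inj_on g ?F" using assms(1) unfolding bij_betw_def by (auto intro: inj_on_subset)
  have img: "g ` ?F = ?F"
  proof
    show "g ` ?F \<subseteq> ?F" using assms unfolding bij_betw_def by auto
    show "?F \<subseteq> g ` ?F"
    proof
      fix d assume d: "d \<in> ?F"
      then obtain d' where "d' \<in> D" "d = g d'" using assms(1) unfolding bij_betw_def by (metis (no_types, lifting) imageE mem_Collect_eq)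
      then show "d \<in> g ` ?F" using d assms(2) by auto
    qed
  qed
  have "(\<Sum>d\<in>?F. h (g d)) = (\<Sum>d\<in>g ` ?F. h d)" using sum.reindex[OF inj, of h] by simp
  then show ?thesis using img by simp
qed

lemma iota_reindex:
  assumes "\<forall>d\<in>D. \<iota> d \<in> D \<and> \<iota> (\<iota> d) = d"
  shows "(\<Sum>d\<in>D. h (\<iota> d)) = (\<Sum>d\<in>D. h d)"
  by (rule sum.reindex_bij_witness[of D \<iota> \<iota>]) (use assms in auto)

lemma energy:
  fixes c :: "'d \<Rightarrow> real" and \<pi> :: "'d \<Rightarrow> 'v" and f :: "'v \<Rightarrow> real"
  assumes "finite D" "\<forall>d\<in>D. \<iota> d \<in> D \<and> \<iota> (\<iota> d) = d" "\<forall>d\<in>D. c d > 0 \<and> c (\<iota> d) = c d"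
    "\<forall>d\<in>D. (\<Sum>d'\<in>{d'\<in>D. \<pi> d' = \<pi> d}. c d' * (f (\<pi> (\<iota> d')) - f (\<pi> d'))) = 0"
  shows "\<forall>d\<in>D. f (\<pi> (\<iota> d)) = f (\<pi> d)"
proof -
  define h where "h = (\<lambda>d. f (\<pi> d) * (c d * (f (\<pi> (\<iota> d)) - f (\<pi> d))))"
  have S0: "(\<Sum>d\<in>D. h d) = 0"
  proof -
    have "(\<Sum>d\<in>D. h d) = (\<Sum>v\<in>\<pi> ` D. \<Sum>d\<in>{d. d \<in> D \<and> \<pi> d = v}. h d)"
      using sum.group[OF assms(1) finite_imageI[OF assms(1)], where g=\<pi> and h=h] by simp
    also have "\<dots> = 0"
    proof (rule sum.neutral, rule ballI)
      fix v assume "v \<in> \<pi> ` D"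
      then obtain d0 where d0: "d0 \<in> D" "v = \<pi> d0" by blast
      have "(\<Sum>d\<in>{d. d \<in> D \<and> \<pi> d = v}. h d) = f v * (\<Sum>d'\<in>{d'\<in>D. \<pi> d' = \<pi> d0}. c d' * (f (\<pi> (\<iota> d')) - f (\<pi> d')))"
        unfolding h_def d0(2) by (simp add: sum_distrib_left)
      also have "\<dots> = 0" using assms(4) d0(1) by simp
      finally show "(\<Sum>d\<in>{d. d \<in> D \<and> \<pi> d = v}. h d) = 0" .
    qed
    finally show ?thesis .
  qed
  have S1: "(\<Sum>d\<in>D. h (\<iota> d)) = 0" using iota_reindex[OF assms(2), of h] S0 by simp
  have sum0: "(\<Sum>d\<in>D. h d + h (\<iota> d)) = 0" using S0 S1 by (simp add: sum.distrib)
  have pt: "h d + h (\<iota> d) = - (c d * (f (\<pi> (\<iota> d)) - f (\<pi> d))\<^sup>2)" if "d \<in> D" for d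
  proof -
    have "\<iota> (\<iota> d) = d" "c (\<iota> d) = c d" using assms(2,3) that by auto
    then show ?thesis unfolding h_def power2_eq_square by (simp add: algebra_simps)
  qed
  have "(\<Sum>d\<in>D. h d + h (\<iota> d)) = (\<Sum>d\<in>D. - (c d * (f (\<pi> (\<iota> d)) - f (\<pi> d))\<^sup>2))"
    by (rule sum.cong[OF refl]) (rule pt)
  then have "(\<Sum>d\<in>D. c d * (f (\<pi> (\<iota> d)) - f (\<pi> d))\<^sup>2) = 0"
    using sum0 by (simp only: sum_negf)
  note sq0 = this
  define g where "g = (\<lambda>d. c d * (f (\<pi> (\<iota> d)) - f (\<pi> d))\<^sup>2)"
  have gnn: "\<forall>d\<in>D. 0 \<le> g d"
  proof
    fix d assume "d \<in> D"
    then have "c d > 0" using assms(3) by blast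
    then show "0 \<le> g d" unfolding g_def by simp
  qed
  have "sum g D = 0" using sq0 unfolding g_def .
  then have "\<forall>d\<in>D. g d = 0" using sum_nonneg_eq_0_iff[OF assms(1)] gnn by metis
  then have "\<forall>d\<in>D. c d * (f (\<pi> (\<iota> d)) - f (\<pi> d))\<^sup>2 = 0" unfolding g_def .
  then show ?thesis
  proof (intro ballI)
    fix d assume "d \<in> D" "\<forall>d\<in>D. c d * (f (\<pi> (\<iota> d)) - f (\<pi> d))\<^sup>2 = 0"
    then have "c d * (f (\<pi> (\<iota> d)) - f (\<pi> d))\<^sup>2 = 0" "c d > 0" using assms(3) by auto
    then show "f (\<pi> (\<iota> d)) = f (\<pi> d)" by simp
  qed
qed

lemma lap_dart:
  fixes c :: "'d \<Rightarrow> real" and \<pi> :: "'d \<Rightarrow> 'v" and s :: "'v \<Rightarrow> real"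
  assumes fin: "finite D" and inv: "\<forall>d\<in>D. \<iota> d \<in> D \<and> \<iota> (\<iota> d) = d"
    and cpos: "\<forall>d\<in>D. c d > 0 \<and> c (\<iota> d) = c d"
    and conn: "\<forall>d\<in>D. \<forall>d'\<in>D. (d, d') \<in> {(a, b). a \<in> D \<and> b \<in> D \<and> (\<pi> a = \<pi> b \<or> b = \<iota> a)}\<^sup>*"
    and ssum: "(\<Sum>v\<in>\<pi> ` D. s v) = 0"
  shows "\<exists>f. \<forall>d\<in>D. (\<Sum>d'\<in>{d'\<in>D. \<pi> d' = \<pi> d}. c d' * (f (\<pi> (\<iota> d')) - f (\<pi> d'))) = s (\<pi> d)"
proof -
  define V where "V = \<pi> ` D"
  define C where "C = (\<lambda>u v. \<Sum>d\<in>{d\<in>D. \<pi> d = u \<and> \<pi> (\<iota> d) = v}. c d)"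
  have finV: "finite V" using fin unfolding V_def by simp
  have symm: "\<forall>u\<in>V. \<forall>v\<in>V. C u v = C v u"
  proof (intro ballI)
    fix u v
    show "C u v = C v u" unfolding C_def
      by (rule sum.reindex_bij_witness[of _ \<iota> \<iota>]) (use inv cpos in auto)
  qed
  have nn: "\<forall>u\<in>V. \<forall>v\<in>V. C u v \<ge> 0" unfolding C_def by (intro ballI sum_nonneg) (use cpos in fastforce)
  have edge: "C (\<pi> d) (\<pi> (\<iota> d)) > 0" if "d \<in> D" for d
  proof -
    have "c d \<le> C (\<pi> d) (\<pi> (\<iota> d))" unfolding C_def
      by (rule member_le_sum) (use that cpos fin in \<open>auto intro: less_imp_le\<close>)
    then show ?thesis using cpos that by fastforce
  qed
  let ?R = "{(a, b). a \<in> V \<and> b \<in> V \<and> C a b > 0}"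
  have cv: "\<forall>u\<in>V. \<forall>v\<in>V. (u, v) \<in> ?R\<^sup>*"
  proof (intro ballI)
    fix u v assume "u \<in> V" "v \<in> V"
    then obtain d d' where dd: "d \<in> D" "d' \<in> D" "u = \<pi> d" "v = \<pi> d'" unfolding V_def by blast
    have "(d, d') \<in> {(a, b). a \<in> D \<and> b \<in> D \<and> (\<pi> a = \<pi> b \<or> b = \<iota> a)}\<^sup>*" using conn dd by blast
    then have "(\<pi> d, \<pi> d') \<in> ?R\<^sup>*"
    proof (induction rule: rtrancl_induct)
      case base then show ?case by simp
    next
      case (step b e)
      then have be: "b \<in> D" "e \<in> D" "\<pi> b = \<pi> e \<or> e = \<iota> b" by auto
      show ?case
      proof (cases "\<pi> b = \<pi> e")
        case True then show ?thesis using step.IH by simp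
      next
        case False
        then have "e = \<iota> b" using be by simp
        then have "(\<pi> b, \<pi> e) \<in> ?R" using edge[OF be(1)] be unfolding V_def by auto
        then show ?thesis using step.IH by (meson rtrancl_into_rtrancl)
      qed
    qed
    then show "(u, v) \<in> ?R\<^sup>*" using dd by simp
  qed
  obtain f where f: "\<forall>u\<in>V. (\<Sum>v\<in>V. C u v * (f v - f u)) = s u"
    using lap_vertex[OF finV symm nn cv] ssum unfolding V_def by blast
  have "(\<Sum>d'\<in>{d'\<in>D. \<pi> d' = \<pi> d}. c d' * (f (\<pi> (\<iota> d')) - f (\<pi> d'))) = s (\<pi> d)" if "d \<in> D" for d
  proof -
    let ?F = "{d'\<in>D. \<pi> d' = \<pi> d}"
    have finF: "finite ?F" using fin by simp
    have "(\<Sum>d'\<in>?F. c d' * (f (\<pi> (\<iota> d')) - f (\<pi> d'))) = (\<Sum>d'\<in>?F. c d' * (f (\<pi> (\<iota> d')) - f (\<pi> d)))"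
      by (rule sum.cong) auto
    also have "\<dots> = (\<Sum>v\<in>V. \<Sum>d'\<in>{x. x \<in> ?F \<and> \<pi> (\<iota> x) = v}. c d' * (f (\<pi> (\<iota> d')) - f (\<pi> d)))"
      by (rule sum.group[symmetric]) (use finF finV inv in \<open>auto simp: V_def\<close>)
    also have "\<dots> = (\<Sum>v\<in>V. C (\<pi> d) v * (f v - f (\<pi> d)))"
    proof (rule sum.cong[OF refl])
      fix v assume "v \<in> V"
      have "(\<Sum>d'\<in>{x. x \<in> ?F \<and> \<pi> (\<iota> x) = v}. c d' * (f (\<pi> (\<iota> d')) - f (\<pi> d)))
          = (\<Sum>d'\<in>{x\<in>D. \<pi> x = \<pi> d \<and> \<pi> (\<iota> x) = v}. c d' * (f v - f (\<pi> d)))"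
        by (rule sum.cong) auto
      also have "\<dots> = C (\<pi> d) v * (f v - f (\<pi> d))" unfolding C_def by (simp add: sum_distrib_right)
      finally show "(\<Sum>d'\<in>{x. x \<in> ?F \<and> \<pi> (\<iota> x) = v}. c d' * (f (\<pi> (\<iota> d')) - f (\<pi> d))) = C (\<pi> d) v * (f v - f (\<pi> d))" .
    qed
    also have "\<dots> = s (\<pi> d)" using f that unfolding V_def by blast
    finally show ?thesis .
  qed
  then show ?thesis by blast
qed


fun epath :: "'d ldart set \<Rightarrow> ('d \<Rightarrow> 'd) \<Rightarrow> ('d \<Rightarrow> 'd) \<Rightarrow> 'd set + 'd set \<Rightarrow> 'd ldart list \<Rightarrow> 'd set + 'd set \<Rightarrow> bool" where
  "epath E \<sigma> \<iota> u [] v = (u = v)"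
| "epath E \<sigma> \<iota> u (e # es) v = (e \<in> E \<and> ltail \<sigma> \<iota> e = u \<and> epath E \<sigma> \<iota> (lhead \<sigma> \<iota> e) es v)"

lemma epath_append: "epath E \<sigma> \<iota> u (xs @ ys) w \<longleftrightarrow> (\<exists>v. epath E \<sigma> \<iota> u xs v \<and> epath E \<sigma> \<iota> v ys w)"
  by (induction xs arbitrary: u) auto

lemma epath_set: "epath E \<sigma> \<iota> u xs v \<Longrightarrow> set xs \<subseteq> E"
  by (induction xs arbitrary: u) auto

lemma epath_chain: "epath E \<sigma> \<iota> u xs v \<Longrightarrow> is_chain \<sigma> \<iota> xs \<and> (xs \<noteq> [] \<longrightarrow> ltail \<sigma> \<iota> (hd xs) = u \<and> lhead \<sigma> \<iota> (last xs) = v)"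
proof (induction xs arbitrary: u)
  case Nil then show ?case by simp
next
  case (Cons e es)
  then show ?case by (cases es) auto
qed

lemma ldarts_simps[simp]: "Prim d \<in> ldarts D \<longleftrightarrow> d \<in> D" "Dual d \<in> ldarts D \<longleftrightarrow> d \<in> D"
  unfolding ldarts_def by auto

lemma lrev_lrev: "comb_map D \<sigma> \<iota> \<Longrightarrow> x \<in> ldarts D \<Longrightarrow> lrev \<iota> (lrev \<iota> x) = x \<and> lrev \<iota> x \<in> ldarts D"
  by (cases x) (auto dest: cm_iota)

lemma lhead_lrev: "comb_map D \<sigma> \<iota> \<Longrightarrow> x \<in> ldarts D \<Longrightarrow> lhead \<sigma> \<iota> (lrev \<iota> x) = ltail \<sigma> \<iota> x"
  unfolding lhead_def using lrev_lrev by metis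

lemma epath_rev:
  assumes cm: "comb_map D \<sigma> \<iota>" and E: "E \<subseteq> ldarts D" "\<forall>e\<in>E. lrev \<iota> e \<in> E"
  shows "epath E \<sigma> \<iota> u xs v \<Longrightarrow> epath E \<sigma> \<iota> v (rev (map (lrev \<iota>) xs)) u"
proof (induction xs arbitrary: u)
  case Nil then show ?case by simp
next
  case (Cons e es)
  then have e: "e \<in> E" "ltail \<sigma> \<iota> e = u" "epath E \<sigma> \<iota> (lhead \<sigma> \<iota> e) es v" by auto
  have "epath E \<sigma> \<iota> v (rev (map (lrev \<iota>) es)) (lhead \<sigma> \<iota> e)" using Cons.IH e(3) .
  moreover have "epath E \<sigma> \<iota> (lhead \<sigma> \<iota> e) [lrev \<iota> e] u"
  proof -
    have "lhead \<sigma> \<iota> (lrev \<iota> e) = u" using lhead_lrev[OF cm, of e] e E by auto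
    moreover have "ltail \<sigma> \<iota> (lrev \<iota> e) = lhead \<sigma> \<iota> e" by (simp add: lhead_def)
    ultimately show ?thesis using e E by simp
  qed
  ultimately show ?case by (auto simp: epath_append)
qed

lemma epath_loop:
  assumes "E \<subseteq> ldarts D" "epath E \<sigma> \<iota> u xs u" "xs \<noteq> []"
  shows "is_loop D \<sigma> \<iota> xs"
  using epath_chain[OF assms(2)] epath_set[OF assms(2)] assms(1,3)
  unfolding is_loop_def is_path_def by blast

lemma sum_rev_lrev:
  assumes "\<forall>e\<in>E. w (lrev \<iota> e) = - w e" "set xs \<subseteq> E"
  shows "sum_list (map w (rev (map (lrev \<iota>) xs))) = - sum_list (map (w::_ \<Rightarrow> real) xs)"
  using assms(2)
proof (induction xs)
  case (Cons e es)
  then show ?case using assms(1) by simp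
qed simp

lemma potential:
  fixes w :: "'d ldart \<Rightarrow> real"
  assumes cm: "comb_map D \<sigma> \<iota>" and E: "E \<subseteq> ldarts D" "\<forall>e\<in>E. lrev \<iota> e \<in> E"
    and anti: "\<forall>e\<in>E. w (lrev \<iota> e) = - w e"
    and lps: "\<forall>\<gamma>. is_loop D \<sigma> \<iota> \<gamma> \<and> set \<gamma> \<subseteq> E \<longrightarrow> sum_list (map w \<gamma>) = 0"
  shows "\<exists>G. \<forall>e\<in>E. w e = G (lhead \<sigma> \<iota> e) - G (ltail \<sigma> \<iota> e)"
proof -
  define conn where "conn = (\<lambda>u v. \<exists>xs. epath E \<sigma> \<iota> u xs v)"
  have csym: "conn u v \<Longrightarrow> conn v u" for u v
    unfolding conn_def using epath_rev[OF cm E] by blast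
  have ctrans: "conn u v \<Longrightarrow> conn v w' \<Longrightarrow> conn u w'" for u v w'
    unfolding conn_def using epath_append by blast
  have crefl: "conn u u" for u unfolding conn_def using epath.simps(1) by blast
  define rep where "rep = (\<lambda>u. SOME r. conn r u)"
  have rep: "conn (rep u) u" for u unfolding rep_def using someI[of "\<lambda>r. conn r u", OF crefl] .
  define pth where "pth = (\<lambda>u. SOME xs. epath E \<sigma> \<iota> (rep u) xs u)"
  have pth: "epath E \<sigma> \<iota> (rep u) (pth u) u" for u
    unfolding pth_def using rep[of u] unfolding conn_def by (rule someI_ex)
  define G where "G = (\<lambda>u. sum_list (map w (pth u)))"
  have "w e = G (lhead \<sigma> \<iota> e) - G (ltail \<sigma> \<iota> e)" if e: "e \<in> E" for e
  proof -
    let ?u = "ltail \<sigma> \<iota> e" and ?v = "lhead \<sigma> \<iota> e"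
    have cuv: "conn ?u ?v" unfolding conn_def using e by (intro exI[of _ "[e]"]) simp
    have "(\<lambda>r. conn r ?u) = (\<lambda>r. conn r ?v)"
      using cuv csym ctrans by blast
    then have r: "rep ?u = rep ?v" unfolding rep_def by simp
    define L where "L = pth ?u @ [e] @ rev (map (lrev \<iota>) (pth ?v))"
    have p1: "epath E \<sigma> \<iota> (rep ?u) (pth ?u) ?u" using pth .
    have p2: "epath E \<sigma> \<iota> ?u [e] ?v" using e by simp
    have p3: "epath E \<sigma> \<iota> ?v (rev (map (lrev \<iota>) (pth ?v))) (rep ?u)"
      using epath_rev[OF cm E pth[of ?v]] r by simp
    have eL: "epath E \<sigma> \<iota> (rep ?u) L (rep ?u)" unfolding L_def using p1 p2 p3 epath_append by blast
    have "is_loop D \<sigma> \<iota> L" using epath_loop[OF E(1) eL] unfolding L_def by simp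
    moreover have "set L \<subseteq> E" using epath_set[OF eL] .
    ultimately have "sum_list (map w L) = 0" using lps by blast
    moreover have "sum_list (map w L) = G ?u + w e - G ?v"
      unfolding L_def G_def using sum_rev_lrev[OF anti epath_set[OF pth[of ?v]]] by simp
    ultimately show ?thesis by simp
  qed
  then show ?thesis by blast
qed

lemma chain_telescope:
  fixes h :: "'d set + 'd set \<Rightarrow> 'a::ab_group_add"
  shows "is_chain \<sigma> \<iota> xs \<Longrightarrow> xs \<noteq> [] \<Longrightarrow>
    sum_list (map (\<lambda>z. h (lhead \<sigma> \<iota> z) - h (ltail \<sigma> \<iota> z)) xs) = h (lhead \<sigma> \<iota> (last xs)) - h (ltail \<sigma> \<iota> (hd xs))"
proof (induction \<sigma> \<iota> xs rule: is_chain.induct)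
  case (3 \<sigma> \<iota> y z zs)
  then show ?case by (cases zs) (simp_all add: algebra_simps)
qed auto

lemma layer_prim:
  "is_chain \<sigma> \<iota> xs \<Longrightarrow> set xs \<subseteq> ldarts D \<Longrightarrow> xs \<noteq> [] \<Longrightarrow> ltail \<sigma> \<iota> (hd xs) = Inl v \<Longrightarrow>
    set xs \<subseteq> Prim ` D \<and> (\<exists>v'. lhead \<sigma> \<iota> (last xs) = Inl v')"
proof (induction \<sigma> \<iota> xs arbitrary: v rule: is_chain.induct)
  case (2 \<sigma> \<iota> y)
  then show ?case by (cases y) (auto simp: lhead_def)
next
  case (3 \<sigma> \<iota> y z zs)
  have "y \<in> Prim ` D" using 3 by (cases y) auto
  moreover have "\<exists>v. ltail \<sigma> \<iota> z = Inl v" using 3 \<open>y \<in> Prim ` D\<close> by (auto simp: lhead_def) (metis ltail.simps(1))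
  ultimately show ?case using 3 by auto
qed auto


definition mk :: "'d set \<Rightarrow> ('d ldart \<Rightarrow> real) \<Rightarrow> ('d \<Rightarrow> complex) \<Rightarrow> 'd ldart \<Rightarrow> complex" where
  "mk D \<rho> a x = (case x of Prim d \<Rightarrow> if d \<in> D then a d else 0
     | Dual d \<Rightarrow> if d \<in> D then \<i> * of_real (\<rho> (Prim d)) * a d else 0)"

lemma mk_simps[simp]:
  "d \<in> D \<Longrightarrow> mk D \<rho> a (Prim d) = a d"
  "d \<in> D \<Longrightarrow> mk D \<rho> a (Dual d) = \<i> * of_real (\<rho> (Prim d)) * a d"
  unfolding mk_def by auto

lemma conf_facts:
  assumes "conf_struct D \<iota> \<rho>" "d \<in> D"
  shows "\<rho> (Prim d) > 0" "\<rho> (Prim (\<iota> d)) = \<rho> (Prim d)" "\<rho> (Dual d) = 1 / \<rho> (Prim d)"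
    "\<rho> (Dual (\<iota> d)) = \<rho> (Dual d)"
proof -
  have a: "\<rho> (Prim d) > 0 \<and> \<rho> (lrev \<iota> (Prim d)) = \<rho> (Prim d) \<and> \<rho> (Prim d) * \<rho> (lstar \<iota> (Prim d)) = 1"
    using assms unfolding conf_struct_def by (metis ldarts_simps(1))
  have b: "\<rho> (lrev \<iota> (Dual d)) = \<rho> (Dual d)"
    using assms unfolding conf_struct_def by (metis ldarts_simps(2))
  show "\<rho> (Prim d) > 0" "\<rho> (Prim (\<iota> d)) = \<rho> (Prim d)" using a by auto
  show "\<rho> (Dual d) = 1 / \<rho> (Prim d)" using a by (auto simp: field_simps)
  show "\<rho> (Dual (\<iota> d)) = \<rho> (Dual d)" using b by simp
qed

context
  fixes D \<sigma> \<iota> \<rho>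
  assumes cm: "comb_map D \<sigma> \<iota>" and cs: "conf_struct D \<iota> \<rho>"
begin

lemma mk_form:
  assumes anti: "\<forall>d\<in>D. a (\<iota> d) = - a d"
  shows "one_form D \<iota> (mk D \<rho> a)" "type10 D \<iota> \<rho> (mk D \<rho> a)"
proof -
  show "one_form D \<iota> (mk D \<rho> a)"
    unfolding one_form_def
  proof (intro conjI ballI allI impI)
    fix x assume x: "x \<in> ldarts D"
    show "mk D \<rho> a (lrev \<iota> x) = - mk D \<rho> a x"
    proof (cases x)
      case (Prim d)
      then have "d \<in> D" "\<iota> d \<in> D" using x cm_iota[OF cm] by auto
      then show ?thesis using Prim anti by simp
    next
      case (Dual d)
      then have "d \<in> D" "\<iota> d \<in> D" using x cm_iota[OF cm] by auto
      then show ?thesis using Dual anti conf_facts[OF cs] by simp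
    qed
  next
    fix x :: "'a ldart" assume "x \<notin> ldarts D"
    then show "mk D \<rho> a x = 0" unfolding mk_def by (cases x) auto
  qed
  show "type10 D \<iota> \<rho> (mk D \<rho> a)"
    unfolding type10_def hodge_def
  proof (intro ballI)
    fix x assume x: "x \<in> ldarts D"
    show "- complex_of_real (\<rho> (lstar \<iota> x)) * mk D \<rho> a (lstar \<iota> x) = - \<i> * mk D \<rho> a x"
    proof (cases x)
      case (Prim d)
      then have d: "d \<in> D" using x by auto
      have "complex_of_real (\<rho> (Dual d)) * complex_of_real (\<rho> (Prim d)) = 1"
        using conf_facts[OF cs d] by (simp flip: of_real_mult)
      then show ?thesis using Prim d by (simp add: algebra_simps)
    next
      case (Dual d)
      then have d: "d \<in> D" "\<iota> d \<in> D" using x cm_iota[OF cm] by auto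
      then show ?thesis using Dual anti conf_facts[OF cs d(1)] by (simp add: algebra_simps)
    qed
  qed
qed

lemma form_mk:
  assumes "one_form D \<iota> \<alpha>" "type10 D \<iota> \<rho> \<alpha>"
  shows "\<alpha> = mk D \<rho> (\<lambda>d. \<alpha> (Prim d))" "\<forall>d\<in>D. \<alpha> (Prim (\<iota> d)) = - \<alpha> (Prim d)"
proof -
  show "\<forall>d\<in>D. \<alpha> (Prim (\<iota> d)) = - \<alpha> (Prim d)"
    using assms(1) unfolding one_form_def by (metis ldarts_simps(1) lrev.simps(1))
  show "\<alpha> = mk D \<rho> (\<lambda>d. \<alpha> (Prim d))"
  proof
    fix x show "\<alpha> x = mk D \<rho> (\<lambda>d. \<alpha> (Prim d)) x"
    proof (cases "x \<in> ldarts D")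
      case False
      then show ?thesis using assms(1) unfolding one_form_def mk_def by (cases x) auto
    next
      case True
      show ?thesis
      proof (cases x)
        case (Prim d) then show ?thesis using True by simp
      next
        case (Dual d)
        then have d: "d \<in> D" using True by simp
        have "- complex_of_real (\<rho> (Dual d)) * \<alpha> (Dual d) = - \<i> * \<alpha> (Prim d)"
          using assms(2) d unfolding type10_def hodge_def by (metis ldarts_simps(1) lstar.simps(1))
        then have e: "complex_of_real (\<rho> (Dual d)) * \<alpha> (Dual d) = \<i> * \<alpha> (Prim d)" by simp
        have "complex_of_real (\<rho> (Dual d)) * complex_of_real (\<rho> (Prim d)) = 1"
          using conf_facts[OF cs d] by (simp flip: of_real_mult)
        then have "\<alpha> (Dual d) = \<i> * complex_of_real (\<rho> (Prim d)) * \<alpha> (Prim d)"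
          using e by (metis (no_types, lifting) mult.assoc mult.commute mult_1)
        then show ?thesis using Dual d by simp
      qed
    qed
  qed
qed

lemma tail_Inl_set: "{x \<in> ldarts D. ltail \<sigma> \<iota> x = Inl v} = Prim ` {d\<in>D. orb \<sigma> d = v}"
proof
  show "{x \<in> ldarts D. ltail \<sigma> \<iota> x = Inl v} \<subseteq> Prim ` {d\<in>D. orb \<sigma> d = v}"
  proof
    fix x assume "x \<in> {x \<in> ldarts D. ltail \<sigma> \<iota> x = Inl v}"
    then show "x \<in> Prim ` {d\<in>D. orb \<sigma> d = v}" by (cases x) auto
  qed
qed auto

lemma tail_Inr_set: "{x \<in> ldarts D. ltail \<sigma> \<iota> x = Inr F} = Dual ` {d\<in>D. orb (\<sigma> \<circ> \<iota>) d = F}"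
proof
  show "{x \<in> ldarts D. ltail \<sigma> \<iota> x = Inr F} \<subseteq> Dual ` {d\<in>D. orb (\<sigma> \<circ> \<iota>) d = F}"
  proof
    fix x assume "x \<in> {x \<in> ldarts D. ltail \<sigma> \<iota> x = Inr F}"
    then show "x \<in> Dual ` {d\<in>D. orb (\<sigma> \<circ> \<iota>) d = F}" by (cases x) auto
  qed
qed auto

lemma fi_Inl: "face_int D \<sigma> \<iota> (mk D \<rho> a) (Inl v) = \<i> * (\<Sum>d\<in>{d\<in>D. orb \<sigma> d = v}. of_real (\<rho> (Prim d)) * a d)"
proof -
  have "face_int D \<sigma> \<iota> (mk D \<rho> a) (Inl v) = (\<Sum>x\<in>Prim ` {d\<in>D. orb \<sigma> d = v}. mk D \<rho> a (lstar \<iota> x))"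
    unfolding face_int_def tail_Inl_set ..
  also have "\<dots> = (\<Sum>d\<in>{d\<in>D. orb \<sigma> d = v}. mk D \<rho> a (Dual d))"
    by (subst sum.reindex) (auto simp: inj_on_def)
  also have "\<dots> = (\<Sum>d\<in>{d\<in>D. orb \<sigma> d = v}. \<i> * (of_real (\<rho> (Prim d)) * a d))"
    by (rule sum.cong) (auto simp: mult.assoc)
  finally show ?thesis by (simp add: sum_distrib_left)
qed

lemma fi_Inr: "face_int D \<sigma> \<iota> (mk D \<rho> a) (Inr F) = (\<Sum>d\<in>{d\<in>D. orb (\<sigma> \<circ> \<iota>) d = F}. a (\<iota> d))"
proof -
  have "face_int D \<sigma> \<iota> (mk D \<rho> a) (Inr F) = (\<Sum>x\<in>Dual ` {d\<in>D. orb (\<sigma> \<circ> \<iota>) d = F}. mk D \<rho> a (lstar \<iota> x))"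
    unfolding face_int_def tail_Inr_set ..
  also have "\<dots> = (\<Sum>d\<in>{d\<in>D. orb (\<sigma> \<circ> \<iota>) d = F}. mk D \<rho> a (Prim (\<iota> d)))"
    by (subst sum.reindex) (auto simp: inj_on_def)
  also have "\<dots> = (\<Sum>d\<in>{d\<in>D. orb (\<sigma> \<circ> \<iota>) d = F}. a (\<iota> d))"
    by (rule sum.cong) (auto dest: cm_iota[OF cm])
  finally show ?thesis .
qed

lemma lverts_cases: "u \<in> lverts D \<sigma> \<iota> \<longleftrightarrow> (\<exists>d\<in>D. u = Inl (orb \<sigma> d)) \<or> (\<exists>d\<in>D. u = Inr (orb (\<sigma> \<circ> \<iota>) d))"
  unfolding lverts_def by auto

end


lemma heads_in:
  "is_chain \<sigma> \<iota> (z # rest) \<Longrightarrow> lhead \<sigma> \<iota> (last (z # rest)) = x' \<Longrightarrow>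
    \<forall>y\<in>set (z # rest). lhead \<sigma> \<iota> y \<in> set (map (ltail \<sigma> \<iota>) rest) \<union> {x'}"
proof (induction rest arbitrary: z)
  case Nil then show ?case by simp
next
  case (Cons a rest)
  then have "is_chain \<sigma> \<iota> (a # rest)" "lhead \<sigma> \<iota> z = ltail \<sigma> \<iota> a" by auto
  then show ?case using Cons by auto
qed

lemma chain_tl: "is_chain \<sigma> \<iota> (z # rest) \<Longrightarrow> is_chain \<sigma> \<iota> rest"
  by (cases rest) auto

context
  fixes D \<sigma> \<iota> \<rho>
  assumes cm: "comb_map D \<sigma> \<iota>" and cs: "conf_struct D \<iota> \<rho>"
begin

lemma inv_D: "\<forall>d\<in>D. \<iota> d \<in> D \<and> \<iota> (\<iota> d) = d" using cm_iota[OF cm] by blast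

lemma conn_gen:
  assumes "\<And>y. y \<in> D \<Longrightarrow> (y, \<sigma> y) \<in> {(a, b). a \<in> D \<and> b \<in> D \<and> (\<pi> a = \<pi> b \<or> b = \<iota> a)}\<^sup>*"
  shows "\<forall>d\<in>D. \<forall>d'\<in>D. (d, d') \<in> {(a, b). a \<in> D \<and> b \<in> D \<and> (\<pi> a = \<pi> b \<or> b = \<iota> a)}\<^sup>*"
proof (intro ballI)
  fix d d' assume d: "d \<in> D" "d' \<in> D"
  let ?R = "{(a, b). a \<in> D \<and> b \<in> D \<and> (\<pi> a = \<pi> b \<or> b = \<iota> a)}"
  have "(d, d') \<in> {(a, b). b = \<sigma> a \<or> b = \<iota> a}\<^sup>*" using cm d unfolding comb_map_def by blast
  then have "(d, d') \<in> ?R\<^sup>* \<and> d' \<in> D"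
  proof (induction rule: rtrancl_induct)
    case base then show ?case using d by simp
  next
    case (step y z)
    then have y: "(d, y) \<in> ?R\<^sup>*" "y \<in> D" "z = \<sigma> y \<or> z = \<iota> y" by auto
    show ?case
    proof (cases "z = \<sigma> y")
      case True
      then show ?thesis using y assms[OF y(2)] cm_sigma[OF cm y(2)] by (meson rtrancl_trans)
    next
      case False
      then have "z = \<iota> y" using y by simp
      then have "(y, z) \<in> ?R" "z \<in> D" using y cm_iota[OF cm y(2)] by auto
      then show ?thesis using y by (meson rtrancl_into_rtrancl)
    qed
  qed
  then show "(d, d') \<in> ?R\<^sup>*" by blast
qed

lemma conn_prim: "\<forall>d\<in>D. \<forall>d'\<in>D. (d, d') \<in> {(a, b). a \<in> D \<and> b \<in> D \<and> (orb \<sigma> a = orb \<sigma> b \<or> b = \<iota> a)}\<^sup>*"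
proof (rule conn_gen)
  fix y assume y: "y \<in> D"
  then have "(y, \<sigma> y) \<in> {(a, b). a \<in> D \<and> b \<in> D \<and> (orb \<sigma> a = orb \<sigma> b \<or> b = \<iota> a)}"
    using pi_sig[OF cm y] cm_sigma[OF cm y] by auto
  then show "(y, \<sigma> y) \<in> {(a, b). a \<in> D \<and> b \<in> D \<and> (orb \<sigma> a = orb \<sigma> b \<or> b = \<iota> a)}\<^sup>*" by (rule r_into_rtrancl)
qed

lemma conn_dual: "\<forall>d\<in>D. \<forall>d'\<in>D. (d, d') \<in> {(a, b). a \<in> D \<and> b \<in> D \<and> (orb (\<sigma> \<circ> \<iota>) a = orb (\<sigma> \<circ> \<iota>) b \<or> b = \<iota> a)}\<^sup>*"
proof (rule conn_gen)
  fix y assume y: "y \<in> D"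
  let ?R = "{(a, b). a \<in> D \<and> b \<in> D \<and> (orb (\<sigma> \<circ> \<iota>) a = orb (\<sigma> \<circ> \<iota>) b \<or> b = \<iota> a)}"
  have "(y, \<iota> y) \<in> ?R" using y cm_iota[OF cm y] by auto
  moreover have "(\<iota> y, \<sigma> y) \<in> ?R" using phi_iota[OF cm y] cm_iota[OF cm y] cm_sigma[OF cm y] y by auto
  ultimately show "(y, \<sigma> y) \<in> ?R\<^sup>*" by (meson converse_rtrancl_into_rtrancl r_into_rtrancl)
qed

lemma PL:
  fixes h :: "'a \<Rightarrow> real"
  assumes "set lam \<subseteq> Prim ` D" "is_chain \<sigma> \<iota> lam" "distinct (map (ltail \<sigma> \<iota>) lam @ [x'])"
    "lam \<noteq> [] \<longrightarrow> lhead \<sigma> \<iota> (last lam) = x'"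
    "\<forall>d\<in>D. h (\<iota> d) = - h d" "\<forall>d\<in>D. (\<Sum>d'\<in>{d'\<in>D. orb \<sigma> d' = orb \<sigma> d}. h d') = 0"
    "\<forall>d\<in>D. h d \<noteq> 0 \<longrightarrow> Prim d \<in> set lam \<or> Prim (\<iota> d) \<in> set lam"
  shows "\<forall>d\<in>D. h d = 0"
  using assms
proof (induction lam)
  case Nil then show ?case by auto
next
  case (Cons z rest)
  obtain e where e: "z = Prim e" "e \<in> D" using Cons.prems(1) by auto
  have heads: "\<forall>y\<in>set (z # rest). lhead \<sigma> \<iota> y \<in> set (map (ltail \<sigma> \<iota>) rest) \<union> {x'}"
    using heads_in[of \<sigma> \<iota> z rest x'] Cons.prems(2,4) by simp
  have nt: "ltail \<sigma> \<iota> z \<notin> set (map (ltail \<sigma> \<iota>) rest) \<union> {x'}" using Cons.prems(3) by auto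
  have others: "h d' = 0" if d': "d' \<in> {d'\<in>D. orb \<sigma> d' = orb \<sigma> e}" "d' \<noteq> e" for d'
  proof (rule ccontr)
    assume hne: "h d' \<noteq> 0"
    have d'D: "d' \<in> D" "orb \<sigma> d' = orb \<sigma> e" using d' by auto
    have c: "Prim d' \<in> set (z # rest) \<or> Prim (\<iota> d') \<in> set (z # rest)" using Cons.prems(7) d'D(1) hne by blast
    have tl: "ltail \<sigma> \<iota> (Prim d') = ltail \<sigma> \<iota> z" using d'D e(1) by simp
    have hd: "lhead \<sigma> \<iota> (Prim (\<iota> d')) = ltail \<sigma> \<iota> z" using d'D e(1) cm_iota[OF cm d'D(1)] by (simp add: lhead_def)
    show False
    proof (cases "Prim d' \<in> set (z # rest)")
      case True
      then have "Prim d' \<in> set rest" using d'(2) e(1) by auto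
      then have "ltail \<sigma> \<iota> z \<in> set (map (ltail \<sigma> \<iota>) rest)" using tl by (metis image_eqI list.set_map)
      then show False using nt by blast
    next
      case False
      then have "Prim (\<iota> d') \<in> set (z # rest)" using c by blast
      then have "lhead \<sigma> \<iota> (Prim (\<iota> d')) \<in> set (map (ltail \<sigma> \<iota>) rest) \<union> {x'}" using heads by blast
      then show False using hd nt by simp
    qed
  qed
  have "(\<Sum>d'\<in>{d'\<in>D. orb \<sigma> d' = orb \<sigma> e}. h d') = h e"
  proof -
    have fin: "finite {d'\<in>D. orb \<sigma> d' = orb \<sigma> e}" using cm_fin[OF cm] by simp
    have "(\<Sum>d'\<in>{d'\<in>D. orb \<sigma> d' = orb \<sigma> e}. h d') = h e + (\<Sum>d'\<in>{d'\<in>D. orb \<sigma> d' = orb \<sigma> e} - {e}. h d')"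
      using sum.remove[OF fin, of e h] e by simp
    also have "(\<Sum>d'\<in>{d'\<in>D. orb \<sigma> d' = orb \<sigma> e} - {e}. h d') = 0"
      by (rule sum.neutral) (use others in blast)
    finally show ?thesis by simp
  qed
  then have he: "h e = 0" "h (\<iota> e) = 0" using Cons.prems(5,6) e by auto
  have "\<forall>d\<in>D. h d \<noteq> 0 \<longrightarrow> Prim d \<in> set rest \<or> Prim (\<iota> d) \<in> set rest"
  proof (intro ballI impI)
    fix d assume d: "d \<in> D" "h d \<noteq> 0"
    then have "d \<noteq> e" "\<iota> d \<noteq> e" using he cm_iota[OF cm d(1)] by auto
    then show "Prim d \<in> set rest \<or> Prim (\<iota> d) \<in> set rest" using Cons.prems(7) d e by auto
  qed
  moreover have "rest \<noteq> [] \<longrightarrow> lhead \<sigma> \<iota> (last rest) = x'" using Cons.prems(4) by auto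
  ultimately show ?case
    using Cons.IH Cons.prems(1,3,5,6) chain_tl[OF Cons.prems(2)] by auto
qed

lemma U1:
  fixes w :: "'a ldart \<Rightarrow> real"
  assumes anti: "\<forall>d\<in>D. w (Prim (\<iota> d)) = - w (Prim d)"
    and lps: "\<forall>\<gamma>. is_loop D \<sigma> \<iota> \<gamma> \<and> set \<gamma> \<subseteq> Prim ` D \<longrightarrow> sum_list (map w \<gamma>) = 0"
    and cc: "\<forall>d\<in>D. (\<Sum>d'\<in>{d'\<in>D. orb \<sigma> d' = orb \<sigma> d}. \<rho> (Prim d') * w (Prim d')) = 0"
  shows "\<forall>d\<in>D. w (Prim d) = 0"
proof -
  have E: "Prim ` D \<subseteq> ldarts D" "\<forall>e\<in>Prim ` D. lrev \<iota> e \<in> Prim ` D" using cm_iota[OF cm] by auto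
  have an: "\<forall>e\<in>Prim ` D. w (lrev \<iota> e) = - w e" using anti by auto
  obtain G where G: "\<forall>e\<in>Prim ` D. w e = G (lhead \<sigma> \<iota> e) - G (ltail \<sigma> \<iota> e)"
    using potential[OF cm E an lps] by blast
  define f where "f = (\<lambda>v. G (Inl v))"
  have wf: "w (Prim d) = f (orb \<sigma> (\<iota> d)) - f (orb \<sigma> d)" if "d \<in> D" for d
    using G that unfolding f_def by (auto simp: lhead_def)
  have "\<forall>d\<in>D. (\<Sum>d'\<in>{d'\<in>D. orb \<sigma> d' = orb \<sigma> d}. \<rho> (Prim d') * (f (orb \<sigma> (\<iota> d')) - f (orb \<sigma> d'))) = 0"
  proof
    fix d assume "d \<in> D"
    have "(\<Sum>d'\<in>{d'\<in>D. orb \<sigma> d' = orb \<sigma> d}. \<rho> (Prim d') * (f (orb \<sigma> (\<iota> d')) - f (orb \<sigma> d')))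
        = (\<Sum>d'\<in>{d'\<in>D. orb \<sigma> d' = orb \<sigma> d}. \<rho> (Prim d') * w (Prim d'))"
      by (rule sum.cong) (auto simp: wf)
    then show "(\<Sum>d'\<in>{d'\<in>D. orb \<sigma> d' = orb \<sigma> d}. \<rho> (Prim d') * (f (orb \<sigma> (\<iota> d')) - f (orb \<sigma> d'))) = 0"
      using cc \<open>d \<in> D\<close> by simp
  qed
  moreover have "\<forall>d\<in>D. \<rho> (Prim d) > 0 \<and> \<rho> (Prim (\<iota> d)) = \<rho> (Prim d)" using conf_facts[OF cs] by blast
  ultimately have "\<forall>d\<in>D. f (orb \<sigma> (\<iota> d)) = f (orb \<sigma> d)"
    using energy[OF cm_fin[OF cm] inv_D, where c="\<lambda>d. \<rho> (Prim d)" and \<pi>="orb \<sigma>" and f=f] by blast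
  then show ?thesis using wf by simp
qed

lemma U2:
  fixes w :: "'a ldart \<Rightarrow> real"
  assumes lamP: "set lam \<subseteq> Prim ` D" and chain: "is_chain \<sigma> \<iota> lam"
    and dist: "distinct (map (ltail \<sigma> \<iota>) lam @ [x'])" and lst: "lam \<noteq> [] \<longrightarrow> lhead \<sigma> \<iota> (last lam) = x'"
    and anti: "\<forall>d\<in>D. w (Dual (\<iota> d)) = - w (Dual d)"
    and lps: "\<forall>\<gamma>. is_loop D \<sigma> \<iota> \<gamma> \<and> avoids_dual \<iota> \<gamma> lam \<and> set \<gamma> \<subseteq> Dual ` D \<longrightarrow> sum_list (map w \<gamma>) = 0"
    and cc: "\<forall>d\<in>D. (\<Sum>d'\<in>{d'\<in>D. orb \<sigma> d' = orb \<sigma> d}. w (Dual d')) = 0"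
    and cl: "\<forall>d\<in>D. (\<Sum>d'\<in>{d'\<in>D. orb (\<sigma> \<circ> \<iota>) d' = orb (\<sigma> \<circ> \<iota>) d}. w (Dual d') / \<rho> (Prim d')) = 0"
  shows "\<forall>d\<in>D. w (Dual d) = 0"
proof -
  define E where "E = {e \<in> Dual ` D. \<forall>z\<in>set lam. e \<noteq> lstar \<iota> z \<and> e \<noteq> lrev \<iota> (lstar \<iota> z)}"
  have E1: "E \<subseteq> ldarts D" unfolding E_def by auto
  have E2: "\<forall>e\<in>E. lrev \<iota> e \<in> E"
  proof
    fix e assume e: "e \<in> E"
    then obtain d where d: "e = Dual d" "d \<in> D" unfolding E_def by auto
    have i: "\<iota> d \<in> D" "\<iota> (\<iota> d) = d" using cm_iota[OF cm d(2)] by auto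
    have "\<forall>z\<in>set lam. Dual (\<iota> d) \<noteq> lstar \<iota> z \<and> Dual (\<iota> d) \<noteq> lrev \<iota> (lstar \<iota> z)"
    proof
      fix z assume z: "z \<in> set lam"
      then obtain g where g: "z = Prim g" "g \<in> D" using lamP by auto
      have "e \<noteq> lstar \<iota> z" "e \<noteq> lrev \<iota> (lstar \<iota> z)" using e z unfolding E_def by auto
      then have "d \<noteq> g" "d \<noteq> \<iota> g" using d g by auto
      then show "Dual (\<iota> d) \<noteq> lstar \<iota> z \<and> Dual (\<iota> d) \<noteq> lrev \<iota> (lstar \<iota> z)"
        using g i cm_iota[OF cm g(2)] by auto
    qed
    then show "lrev \<iota> e \<in> E" unfolding E_def using d i by auto
  qed
  have an: "\<forall>e\<in>E. w (lrev \<iota> e) = - w e" using anti unfolding E_def by auto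
  have lp: "\<forall>\<gamma>. is_loop D \<sigma> \<iota> \<gamma> \<and> set \<gamma> \<subseteq> E \<longrightarrow> sum_list (map w \<gamma>) = 0"
  proof (intro allI impI)
    fix \<gamma> assume g: "is_loop D \<sigma> \<iota> \<gamma> \<and> set \<gamma> \<subseteq> E"
    then have "avoids_dual \<iota> \<gamma> lam" "set \<gamma> \<subseteq> Dual ` D" unfolding avoids_dual_def E_def by auto
    then show "sum_list (map w \<gamma>) = 0" using lps g by blast
  qed
  obtain G where G: "\<forall>e\<in>E. w e = G (lhead \<sigma> \<iota> e) - G (ltail \<sigma> \<iota> e)"
    using potential[OF cm E1 E2 an lp] by blast
  define g where "g = (\<lambda>F. G (Inr F))"
  define \<phi> where "\<phi> = orb (\<sigma> \<circ> \<iota>)"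
  define h where "h = (\<lambda>d. w (Dual d) - (g (\<phi> (\<iota> d)) - g (\<phi> d)))"
  have h0: "h d = 0" if "d \<in> D" "Dual d \<in> E" for d
    using G that unfolding h_def g_def \<phi>_def by (auto simp: lhead_def)
  have hanti: "\<forall>d\<in>D. h (\<iota> d) = - h d" unfolding h_def using anti cm_iota[OF cm] by auto
  have hcc: "\<forall>d\<in>D. (\<Sum>d'\<in>{d'\<in>D. orb \<sigma> d' = orb \<sigma> d}. h d') = 0"
  proof
    fix d assume d: "d \<in> D"
    let ?F = "{d'\<in>D. orb \<sigma> d' = orb \<sigma> d}"
    have "(\<Sum>d'\<in>?F. g (\<phi> (\<iota> d'))) = (\<Sum>d'\<in>?F. g (\<phi> (\<sigma> d')))"
      by (rule sum.cong) (auto simp: \<phi>_def phi_iota[OF cm])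
    also have "\<dots> = (\<Sum>d'\<in>?F. g (\<phi> d'))"
      using fiber_reindex[OF cm_bij_sigma[OF cm], where \<pi>="orb \<sigma>" and v="orb \<sigma> d" and h="\<lambda>d. g (\<phi> d)"] pi_sig[OF cm] by blast
    finally have "(\<Sum>d'\<in>?F. g (\<phi> (\<iota> d'))) = (\<Sum>d'\<in>?F. g (\<phi> d'))" .
    then show "(\<Sum>d'\<in>?F. h d') = 0" unfolding h_def using cc d by (simp add: sum_subtractf)
  qed
  have hsupp: "\<forall>d\<in>D. h d \<noteq> 0 \<longrightarrow> Prim d \<in> set lam \<or> Prim (\<iota> d) \<in> set lam"
  proof (intro ballI impI)
    fix d assume d: "d \<in> D" "h d \<noteq> 0"
    then have "Dual d \<notin> E" using h0 by blast
    then obtain z where z: "z \<in> set lam" "Dual d = lstar \<iota> z \<or> Dual d = lrev \<iota> (lstar \<iota> z)"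
      unfolding E_def using d by auto
    then obtain e where e: "z = Prim e" "e \<in> D" using lamP by auto
    then have "d = e \<or> d = \<iota> e" using z by auto
    then show "Prim d \<in> set lam \<or> Prim (\<iota> d) \<in> set lam" using z e cm_iota[OF cm e(2)] by auto
  qed
  have hz: "\<forall>d\<in>D. h d = 0" using PL[OF lamP chain dist lst hanti hcc hsupp] .
  then have wg: "w (Dual d) = g (\<phi> (\<iota> d)) - g (\<phi> d)" if "d \<in> D" for d using that unfolding h_def by auto
  have "\<forall>d\<in>D. (\<Sum>d'\<in>{d'\<in>D. \<phi> d' = \<phi> d}. (1 / \<rho> (Prim d')) * (g (\<phi> (\<iota> d')) - g (\<phi> d'))) = 0"
  proof
    fix d assume "d \<in> D"
    have "(\<Sum>d'\<in>{d'\<in>D. \<phi> d' = \<phi> d}. (1 / \<rho> (Prim d')) * (g (\<phi> (\<iota> d')) - g (\<phi> d')))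
        = (\<Sum>d'\<in>{d'\<in>D. \<phi> d' = \<phi> d}. w (Dual d') / \<rho> (Prim d'))"
      by (rule sum.cong) (auto simp: wg)
    then show "(\<Sum>d'\<in>{d'\<in>D. \<phi> d' = \<phi> d}. (1 / \<rho> (Prim d')) * (g (\<phi> (\<iota> d')) - g (\<phi> d'))) = 0"
      using cl \<open>d \<in> D\<close> unfolding \<phi>_def by simp
  qed
  moreover have "\<forall>d\<in>D. 1 / \<rho> (Prim d) > 0 \<and> 1 / \<rho> (Prim (\<iota> d)) = 1 / \<rho> (Prim d)" using conf_facts[OF cs] by simp
  ultimately have "\<forall>d\<in>D. g (\<phi> (\<iota> d)) = g (\<phi> d)"
    using energy[OF cm_fin[OF cm] inv_D, where c="\<lambda>d. 1 / \<rho> (Prim d)" and \<pi>=\<phi> and f=g] by blast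
  then show ?thesis using wg by simp
qed

end


lemma Re_sum_list: "Re (sum_list xs) = sum_list (map Re xs)"
  by (induction xs) auto
lemma Im_sum_list: "Im (sum_list xs) = sum_list (map Im xs)"
  by (induction xs) auto

context
  fixes D \<sigma> \<iota> \<rho>
  assumes cm: "comb_map D \<sigma> \<iota>" and cs: "conf_struct D \<iota> \<rho>"
begin

lemma cpos_prim: "\<forall>d\<in>D. \<rho> (Prim d) > 0 \<and> \<rho> (Prim (\<iota> d)) = \<rho> (Prim d)"
  using conf_facts[OF cs] by blast

lemma cpos_dual: "\<forall>d\<in>D. 1 / \<rho> (Prim d) > 0 \<and> 1 / \<rho> (Prim (\<iota> d)) = 1 / \<rho> (Prim d)"
  using conf_facts[OF cs] by simp

lemma delta_sum_pm:
  assumes "finite V" "v0 \<in> V" "v1 \<in> V"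
  shows "(\<Sum>v\<in>V. (c::real) * ((if v = v0 then 1 else 0) - (if v = v1 then 1 else 0))) = 0"
proof -
  have "(\<Sum>v\<in>V. (c::real) * ((if v = v0 then 1 else 0) - (if v = v1 then 1 else 0)))
      = c * ((\<Sum>v\<in>V. if v = v0 then 1 else 0) - (\<Sum>v\<in>V. if v = v1 then 1 else 0))"
    by (simp only: sum_subtractf[symmetric] sum_distrib_left)
  also have "\<dots> = 0" using assms by (simp add: sum.delta)
  finally show ?thesis .
qed

lemma closed_exact_faces:
  fixes f :: "'a set \<Rightarrow> real"
  assumes "d0 \<in> D"
  shows "(\<Sum>d\<in>{d\<in>D. orb (\<sigma> \<circ> \<iota>) d = orb (\<sigma> \<circ> \<iota>) d0}. complex_of_real (f (orb \<sigma> d) - f (orb \<sigma> (\<iota> d)))) = 0"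
proof -
  let ?F = "{d\<in>D. orb (\<sigma> \<circ> \<iota>) d = orb (\<sigma> \<circ> \<iota>) d0}"
  have "(\<Sum>d\<in>?F. f (orb \<sigma> (\<iota> d))) = (\<Sum>d\<in>?F. f (orb \<sigma> ((\<sigma> \<circ> \<iota>) d)))"
    by (rule sum.cong) (auto simp: pi_sig[OF cm] cm_iota[OF cm])
  also have "\<dots> = (\<Sum>d\<in>?F. f (orb \<sigma> d))"
    using fiber_reindex[OF cm_bij_si[OF cm], where \<pi>="orb (\<sigma> \<circ> \<iota>)" and v="orb (\<sigma> \<circ> \<iota>) d0" and h="\<lambda>d. f (orb \<sigma> d)"]
      phi_si[OF cm] by auto
  finally have "(\<Sum>d\<in>?F. f (orb \<sigma> d) - f (orb \<sigma> (\<iota> d))) = 0" by (simp add: sum_subtractf)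
  then have "complex_of_real (\<Sum>d\<in>?F. f (orb \<sigma> d) - f (orb \<sigma> (\<iota> d))) = 0" by simp
  then show ?thesis by (simp only: of_real_sum)
qed

lemma exists_alpha:
  assumes v0: "v0 \<in> orb \<sigma> ` D" and v1: "v1 \<in> orb \<sigma> ` D" and ne: "v0 \<noteq> v1"
  shows "\<exists>\<alpha>. meromorphic D \<sigma> \<iota> \<rho> {Inl v0, Inl v1} \<alpha> \<and> residue D \<sigma> \<iota> \<alpha> (Inl v0) = 1 \<and>
      residue D \<sigma> \<iota> \<alpha> (Inl v1) = -1 \<and> (\<forall>\<gamma>. is_loop D \<sigma> \<iota> \<gamma> \<longrightarrow> Re (holonomy \<alpha> \<gamma>) = 0)"
proof -
  define s where "s = (\<lambda>v. 2 * pi * ((if v = v0 then 1 else 0) - (if v = v1 then 1 else 0)))"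
  have ssum: "(\<Sum>v\<in>orb \<sigma> ` D. s v) = 0" unfolding s_def
    by (rule delta_sum_pm) (use v0 v1 cm_fin[OF cm] in auto)
  obtain f where f: "\<forall>d\<in>D. (\<Sum>d'\<in>{d'\<in>D. orb \<sigma> d' = orb \<sigma> d}. \<rho> (Prim d') * (f (orb \<sigma> (\<iota> d')) - f (orb \<sigma> d'))) = s (orb \<sigma> d)"
    using lap_dart[OF cm_fin[OF cm] inv_D[OF cm cs] cpos_prim conn_prim[OF cm cs] ssum] by blast
  define a where "a = (\<lambda>d. complex_of_real (f (orb \<sigma> (\<iota> d)) - f (orb \<sigma> d)))"
  define \<alpha> where "\<alpha> = mk D \<rho> a"
  have anti: "\<forall>d\<in>D. a (\<iota> d) = - a d" unfolding a_def using cm_iota[OF cm] by auto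
  have fiL: "face_int D \<sigma> \<iota> \<alpha> (Inl (orb \<sigma> d)) = \<i> * complex_of_real (s (orb \<sigma> d))" if "d \<in> D" for d
  proof -
    let ?F = "{d'\<in>D. orb \<sigma> d' = orb \<sigma> d}"
    have eq: "(\<Sum>d'\<in>?F. \<rho> (Prim d') * (f (orb \<sigma> (\<iota> d')) - f (orb \<sigma> d'))) = s (orb \<sigma> d)"
      using f that by blast
    have "face_int D \<sigma> \<iota> \<alpha> (Inl (orb \<sigma> d)) = \<i> * (\<Sum>d'\<in>?F. complex_of_real (\<rho> (Prim d')) * a d')"
      unfolding \<alpha>_def fi_Inl[OF cm cs] ..
    also have "(\<Sum>d'\<in>?F. complex_of_real (\<rho> (Prim d')) * a d') = complex_of_real (\<Sum>d'\<in>?F. \<rho> (Prim d') * (f (orb \<sigma> (\<iota> d')) - f (orb \<sigma> d')))"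
      unfolding a_def by simp
    also have "\<dots> = complex_of_real (s (orb \<sigma> d))" using eq by simp
    finally show ?thesis .
  qed
  have fiR: "face_int D \<sigma> \<iota> \<alpha> (Inr (orb (\<sigma> \<circ> \<iota>) d)) = 0" if "d \<in> D" for d
  proof -
    have "face_int D \<sigma> \<iota> \<alpha> (Inr (orb (\<sigma> \<circ> \<iota>) d)) = (\<Sum>d'\<in>{d'\<in>D. orb (\<sigma> \<circ> \<iota>) d' = orb (\<sigma> \<circ> \<iota>) d}. complex_of_real (f (orb \<sigma> d') - f (orb \<sigma> (\<iota> d'))))"
      unfolding \<alpha>_def fi_Inr[OF cm cs] a_def by (rule sum.cong) (auto simp: cm_iota[OF cm])
    also have "\<dots> = 0" by (rule closed_exact_faces[OF that])
    finally show ?thesis .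
  qed
  have pi2: "2 * \<i> * complex_of_real pi \<noteq> 0" by simp
  have r0: "residue D \<sigma> \<iota> \<alpha> (Inl v0) = 1"
  proof -
    obtain d0 where d0: "d0 \<in> D" "v0 = orb \<sigma> d0" using v0 by blast
    have "face_int D \<sigma> \<iota> \<alpha> (Inl v0) = \<i> * complex_of_real (2 * pi)"
      using fiL[OF d0(1)] d0(2) ne unfolding s_def by simp
    then show ?thesis unfolding residue_def by simp
  qed
  have r1: "residue D \<sigma> \<iota> \<alpha> (Inl v1) = -1"
  proof -
    obtain d0 where d0: "d0 \<in> D" "v1 = orb \<sigma> d0" using v1 by blast
    have "face_int D \<sigma> \<iota> \<alpha> (Inl v1) = - (\<i> * complex_of_real (2 * pi))"
      using fiL[OF d0(1)] d0(2) ne unfolding s_def by simp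
    then show ?thesis unfolding residue_def by simp
  qed
  have mero: "meromorphic D \<sigma> \<iota> \<rho> {Inl v0, Inl v1} \<alpha>"
    unfolding meromorphic_def
  proof (intro conjI ballI)
    show "one_form D \<iota> \<alpha>" "type10 D \<iota> \<rho> \<alpha>" unfolding \<alpha>_def using mk_form[OF cm cs anti] by auto
  next
    fix u assume u: "u \<in> lverts D \<sigma> \<iota> - {Inl v0, Inl v1}"
    then have "u \<in> lverts D \<sigma> \<iota>" "u \<noteq> Inl v0" "u \<noteq> Inl v1" by auto
    then consider (l) d where "d \<in> D" "u = Inl (orb \<sigma> d)" | (r) d where "d \<in> D" "u = Inr (orb (\<sigma> \<circ> \<iota>) d)"
      unfolding lverts_cases[OF cm cs] by blast
    then show "face_int D \<sigma> \<iota> \<alpha> u = 0"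
    proof cases
      case l
      then have "orb \<sigma> d \<noteq> v0" "orb \<sigma> d \<noteq> v1" using \<open>u \<noteq> Inl v0\<close> \<open>u \<noteq> Inl v1\<close> by auto
      then show ?thesis using fiL[OF l(1)] l(2) unfolding s_def by simp
    next
      case r
      then show ?thesis using fiR by simp
    qed
  next
    fix u :: "'a set + 'a set" assume "u \<in> {Inl v0, Inl v1}"
    then show "face_int D \<sigma> \<iota> \<alpha> u \<noteq> 0" using r0 r1 unfolding residue_def by auto
  qed
  have hol: "Re (holonomy \<alpha> \<gamma>) = 0" if lp: "is_loop D \<sigma> \<iota> \<gamma>" for \<gamma>
  proof -
    obtain u where p: "is_path D \<sigma> \<iota> \<gamma> u u" using lp unfolding is_loop_def by blast
    define R :: "'a set + 'a set \<Rightarrow> real" where "R = (\<lambda>u. case u of Inl v \<Rightarrow> f v | Inr _ \<Rightarrow> 0)"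
    have "Re (\<alpha> e) = R (lhead \<sigma> \<iota> e) - R (ltail \<sigma> \<iota> e)" if "e \<in> ldarts D" for e
      using that unfolding \<alpha>_def a_def R_def by (cases e) (auto simp: lhead_def)
    then have "map (Re \<circ> \<alpha>) \<gamma> = map (\<lambda>z. R (lhead \<sigma> \<iota> z) - R (ltail \<sigma> \<iota> z)) \<gamma>"
      using p unfolding is_path_def by (auto intro!: map_cong)
    note m = this
    have pp: "is_chain \<sigma> \<iota> \<gamma>" "\<gamma> \<noteq> []" using p unfolding is_path_def by auto
    have "Re (holonomy \<alpha> \<gamma>) = sum_list (map (Re \<circ> \<alpha>) \<gamma>)" unfolding holonomy_def Re_sum_list by simp
    also have "\<dots> = sum_list (map (\<lambda>z. R (lhead \<sigma> \<iota> z) - R (ltail \<sigma> \<iota> z)) \<gamma>)" by (simp only: m)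
    also have "\<dots> = R (lhead \<sigma> \<iota> (last \<gamma>)) - R (ltail \<sigma> \<iota> (hd \<gamma>))" by (rule chain_telescope[OF pp])
    finally have "Re (holonomy \<alpha> \<gamma>) = R (lhead \<sigma> \<iota> (last \<gamma>)) - R (ltail \<sigma> \<iota> (hd \<gamma>))" .
    then show ?thesis using p unfolding is_path_def by simp
  qed
  show ?thesis using mero r0 r1 hol by blast
qed

end


context
  fixes D \<sigma> \<iota> \<rho>
  assumes cm: "comb_map D \<sigma> \<iota>" and cs: "conf_struct D \<iota> \<rho>"
begin

definition Jf :: "'a ldart list \<Rightarrow> 'a \<Rightarrow> real" where
  "Jf lam d = (\<Sum>z\<in>set lam. (if z = Prim d then 1 else 0) - (if z = Prim (\<iota> d) then 1 else 0))"

lemma J_anti: "d \<in> D \<Longrightarrow> Jf lam (\<iota> d) = - Jf lam d"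
  unfolding Jf_def using cm_iota[OF cm] by (simp add: sum_negf[symmetric])

lemma J_avoid:
  assumes "avoids_dual \<iota> \<gamma> lam" "Dual d \<in> set \<gamma>" "d \<in> D"
  shows "Jf lam d = 0"
proof -
  have "(if z = Prim d then 1 else 0) - (if z = Prim (\<iota> d) then 1 else 0) = (0::real)" if z: "z \<in> set lam" for z
  proof -
    have "Dual d \<noteq> lstar \<iota> z" "Dual d \<noteq> lrev \<iota> (lstar \<iota> z)" using assms z unfolding avoids_dual_def by auto
    then have "z \<noteq> Prim d" "z \<noteq> Prim (\<iota> d)" using cm_iota[OF cm assms(3)] by auto
    then show ?thesis by simp
  qed
  then show ?thesis unfolding Jf_def by simp
qed

lemma J_sum:
  assumes lamP: "set lam \<subseteq> Prim ` D" and ch: "is_chain \<sigma> \<iota> lam" and ne: "lam \<noteq> []"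
    and hd: "ltail \<sigma> \<iota> (hd lam) = Inl v0" and lst: "lhead \<sigma> \<iota> (last lam) = Inl v1"
    and dist: "distinct lam" and d0: "d0 \<in> D"
  shows "(\<Sum>d\<in>{d\<in>D. orb \<sigma> d = orb \<sigma> d0}. Jf lam d) = (if orb \<sigma> d0 = v0 then 1 else 0) - (if orb \<sigma> d0 = v1 then 1 else 0)"
proof -
  let ?F = "{d\<in>D. orb \<sigma> d = orb \<sigma> d0}"
  define H :: "'a set + 'a set \<Rightarrow> real" where "H = (\<lambda>u. if u = Inl (orb \<sigma> d0) then 1 else 0)"
  have inner: "(\<Sum>d\<in>?F. (if z = Prim d then 1 else 0) - (if z = Prim (\<iota> d) then 1 else 0)) = H (ltail \<sigma> \<iota> z) - H (lhead \<sigma> \<iota> z)"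
    if z: "z \<in> set lam" for z
  proof -
    obtain e where e: "z = Prim e" "e \<in> D" using z lamP by auto
    have ie: "\<iota> e \<in> D" "\<iota> (\<iota> e) = e" using cm_iota[OF cm e(2)] by auto
    have s1: "(\<Sum>d\<in>?F. (if z = Prim d then 1 else 0)) = (if e \<in> ?F then (1::real) else 0)"
      using e by (simp add: sum.delta' cm_fin[OF cm] eq_commute[of e])
    have "(\<Sum>d\<in>?F. (if z = Prim (\<iota> d) then 1 else 0)) = (\<Sum>d\<in>?F. (if d = \<iota> e then (1::real) else 0))"
      by (rule sum.cong) (use e ie cm_iota[OF cm] in auto)
    also have "\<dots> = (if \<iota> e \<in> ?F then 1 else 0)" by (simp add: sum.delta cm_fin[OF cm])
    finally have s2: "(\<Sum>d\<in>?F. (if z = Prim (\<iota> d) then 1 else 0)) = (if \<iota> e \<in> ?F then (1::real) else 0)" .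
    have "(\<Sum>d\<in>?F. (if z = Prim d then 1 else 0) - (if z = Prim (\<iota> d) then 1 else 0))
        = (\<Sum>d\<in>?F. (if z = Prim d then 1 else 0)) - (\<Sum>d\<in>?F. (if z = Prim (\<iota> d) then (1::real) else 0))"
      by (rule sum_subtractf)
    also have "\<dots> = H (ltail \<sigma> \<iota> z) - H (lhead \<sigma> \<iota> z)"
      unfolding s1 s2 H_def using e ie by (simp add: lhead_def)
    finally show ?thesis .
  qed
  have "(\<Sum>d\<in>?F. Jf lam d) = (\<Sum>z\<in>set lam. \<Sum>d\<in>?F. (if z = Prim d then 1 else 0) - (if z = Prim (\<iota> d) then 1 else 0))"
    unfolding Jf_def by (rule sum.swap)
  also have "\<dots> = (\<Sum>z\<in>set lam. H (ltail \<sigma> \<iota> z) - H (lhead \<sigma> \<iota> z))"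
    by (rule sum.cong) (use inner in auto)
  also have "\<dots> = sum_list (map (\<lambda>z. H (ltail \<sigma> \<iota> z) - H (lhead \<sigma> \<iota> z)) lam)"
    using dist by (simp add: sum_list_distinct_conv_sum_set)
  also have "\<dots> = - sum_list (map (\<lambda>z. H (lhead \<sigma> \<iota> z) - H (ltail \<sigma> \<iota> z)) lam)"
    by (induction lam) auto
  also have "\<dots> = H (Inl v0) - H (Inl v1)" using chain_telescope[OF ch ne, of H] hd lst by simp
  also have "\<dots> = (if orb \<sigma> d0 = v0 then 1 else 0) - (if orb \<sigma> d0 = v1 then 1 else 0)"
    unfolding H_def by auto
  finally show ?thesis .
qed

lemma tele_sig:
  fixes g :: "'a set \<Rightarrow> real"
  assumes "d0 \<in> D"
  shows "(\<Sum>d\<in>{d\<in>D. orb \<sigma> d = orb \<sigma> d0}. g (orb (\<sigma> \<circ> \<iota>) (\<iota> d)) - g (orb (\<sigma> \<circ> \<iota>) d)) = 0"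
proof -
  let ?F = "{d'\<in>D. orb \<sigma> d' = orb \<sigma> d0}"
  have "(\<Sum>d'\<in>?F. g (orb (\<sigma> \<circ> \<iota>) (\<iota> d'))) = (\<Sum>d'\<in>?F. g (orb (\<sigma> \<circ> \<iota>) (\<sigma> d')))"
    by (rule sum.cong) (auto simp: phi_iota[OF cm])
  also have "\<dots> = (\<Sum>d'\<in>?F. g (orb (\<sigma> \<circ> \<iota>) d'))"
    using fiber_reindex[OF cm_bij_sigma[OF cm], where \<pi>="orb \<sigma>" and v="orb \<sigma> d0" and h="\<lambda>d. g (orb (\<sigma> \<circ> \<iota>) d)"] pi_sig[OF cm] by blast
  finally show ?thesis by (simp add: sum_subtractf)
qed

end


context
  fixes D \<sigma> \<iota> \<rho>
  assumes cm: "comb_map D \<sigma> \<iota>" and cs: "conf_struct D \<iota> \<rho>"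
begin

lemma exists_beta:
  assumes v0: "v0 \<in> orb \<sigma> ` D" and v1: "v1 \<in> orb \<sigma> ` D" and ne: "v0 \<noteq> v1"
    and lamP: "set lam \<subseteq> Prim ` D" and ch: "is_chain \<sigma> \<iota> lam" and lne: "lam \<noteq> []"
    and hd: "ltail \<sigma> \<iota> (hd lam) = Inl v0" and lst: "lhead \<sigma> \<iota> (last lam) = Inl v1"
    and dist: "distinct lam"
  shows "\<exists>\<beta>. meromorphic D \<sigma> \<iota> \<rho> {Inl v0, Inl v1} \<beta> \<and> residue D \<sigma> \<iota> \<beta> (Inl v0) = 1 \<and>
      residue D \<sigma> \<iota> \<beta> (Inl v1) = -1 \<and> (\<forall>\<gamma>. is_loop D \<sigma> \<iota> \<gamma> \<and> avoids_dual \<iota> \<gamma> lam \<longrightarrow> Im (holonomy \<beta> \<gamma>) = 0)"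
proof -
  define J where "J = Jf \<iota> lam"
  define \<phi> where "\<phi> = orb (\<sigma> \<circ> \<iota>)"
  define s where "s = (\<lambda>F. - 2 * pi * (\<Sum>d\<in>{d\<in>D. \<phi> d = F}. J d / \<rho> (Prim d)))"
  have fin: "finite D" using cm_fin[OF cm] .
  have SJ: "(\<Sum>d\<in>D. J d / \<rho> (Prim d)) = 0"
  proof -
    have "(\<Sum>d\<in>D. J d / \<rho> (Prim d)) = (\<Sum>d\<in>D. J (\<iota> d) / \<rho> (Prim (\<iota> d)))"
      using iota_reindex[OF inv_D[OF cm cs], of "\<lambda>d. J d / \<rho> (Prim d)"] by simp
    also have "\<dots> = (\<Sum>d\<in>D. - (J d / \<rho> (Prim d)))"
      by (rule sum.cong) (auto simp: J_def J_anti[OF cm cs] conf_facts[OF cs])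
    finally show ?thesis by (simp add: sum_negf)
  qed
  have ssum: "(\<Sum>F\<in>\<phi> ` D. s F) = 0"
  proof -
    have "(\<Sum>F\<in>\<phi> ` D. \<Sum>d\<in>{d\<in>D. \<phi> d = F}. J d / \<rho> (Prim d)) = (\<Sum>d\<in>D. J d / \<rho> (Prim d))"
      using sum.group[OF fin finite_imageI[OF fin], where g=\<phi> and h="\<lambda>d. J d / \<rho> (Prim d)"] by simp
    then show ?thesis unfolding s_def using SJ by (simp add: sum_negf sum_distrib_left[symmetric])
  qed
  obtain g where g: "\<forall>d\<in>D. (\<Sum>d'\<in>{d'\<in>D. \<phi> d' = \<phi> d}. 1 / \<rho> (Prim d') * (g (\<phi> (\<iota> d')) - g (\<phi> d'))) = s (\<phi> d)"
    using lap_dart[OF fin inv_D[OF cm cs] cpos_dual[OF cm cs] conn_dual[OF cm cs, folded \<phi>_def] ssum] by blast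
  define b where "b = (\<lambda>d. (g (\<phi> (\<iota> d)) - g (\<phi> d) + 2 * pi * J d) / \<rho> (Prim d))"
  define a where "a = (\<lambda>d. complex_of_real (b d))"
  define \<beta> where "\<beta> = mk D \<rho> a"
  have banti: "b (\<iota> d) = - b d" if "d \<in> D" for d
    unfolding b_def J_def using that cm_iota[OF cm that] J_anti[OF cm cs that] conf_facts[OF cs that]
    by (simp add: field_simps)
  have anti: "\<forall>d\<in>D. a (\<iota> d) = - a d" unfolding a_def using banti by simp
  have fiR: "face_int D \<sigma> \<iota> \<beta> (Inr (\<phi> d0)) = 0" if d0: "d0 \<in> D" for d0
  proof -
    let ?F = "{d\<in>D. \<phi> d = \<phi> d0}"
    have "(\<Sum>d\<in>?F. b d) = (\<Sum>d\<in>?F. 1 / \<rho> (Prim d) * (g (\<phi> (\<iota> d)) - g (\<phi> d)) + 2 * pi * (J d / \<rho> (Prim d)))"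
      by (rule sum.cong) (auto simp: b_def add_divide_distrib diff_divide_distrib)
    also have "\<dots> = s (\<phi> d0) + 2 * pi * (\<Sum>d\<in>?F. J d / \<rho> (Prim d))"
      using g d0 by (simp add: sum.distrib sum_distrib_left)
    also have "\<dots> = 0" unfolding s_def by simp
    finally have B: "(\<Sum>d\<in>?F. b d) = 0" .
    have "face_int D \<sigma> \<iota> \<beta> (Inr (\<phi> d0)) = (\<Sum>d\<in>?F. a (\<iota> d))"
      unfolding \<beta>_def fi_Inr[OF cm cs] \<phi>_def ..
    also have "\<dots> = (\<Sum>d\<in>?F. - complex_of_real (b d))" by (rule sum.cong) (auto simp: a_def banti)
    also have "\<dots> = - complex_of_real (\<Sum>d\<in>?F. b d)" by (simp add: sum_negf)
    finally show ?thesis using B by simp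
  qed
  have fiL: "face_int D \<sigma> \<iota> \<beta> (Inl (orb \<sigma> d0)) = \<i> * complex_of_real (2 * pi * ((if orb \<sigma> d0 = v0 then 1 else 0) - (if orb \<sigma> d0 = v1 then 1 else 0)))"
    if d0: "d0 \<in> D" for d0
  proof -
    let ?F = "{d\<in>D. orb \<sigma> d = orb \<sigma> d0}"
    have "(\<Sum>d\<in>?F. \<rho> (Prim d) * b d) = (\<Sum>d\<in>?F. (g (\<phi> (\<iota> d)) - g (\<phi> d)) + 2 * pi * J d)"
    proof (rule sum.cong[OF refl])
      fix d assume "d \<in> ?F"
      then have "\<rho> (Prim d) > 0" using conf_facts[OF cs] by blast
      then show "\<rho> (Prim d) * b d = (g (\<phi> (\<iota> d)) - g (\<phi> d)) + 2 * pi * J d" unfolding b_def by simp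
    qed
    also have "\<dots> = (\<Sum>d\<in>?F. g (\<phi> (\<iota> d)) - g (\<phi> d)) + 2 * pi * (\<Sum>d\<in>?F. J d)"
      by (simp add: sum.distrib sum_distrib_left)
    also have "\<dots> = 2 * pi * ((if orb \<sigma> d0 = v0 then 1 else 0) - (if orb \<sigma> d0 = v1 then 1 else 0))"
      using tele_sig[OF cm cs d0, of g] J_sum[OF cm cs lamP ch lne hd lst dist d0] unfolding \<phi>_def J_def by simp
    finally have B: "(\<Sum>d\<in>?F. \<rho> (Prim d) * b d) = 2 * pi * ((if orb \<sigma> d0 = v0 then 1 else 0) - (if orb \<sigma> d0 = v1 then 1 else 0))" .
    have "face_int D \<sigma> \<iota> \<beta> (Inl (orb \<sigma> d0)) = \<i> * (\<Sum>d\<in>?F. complex_of_real (\<rho> (Prim d)) * a d)"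
      unfolding \<beta>_def fi_Inl[OF cm cs] ..
    also have "(\<Sum>d\<in>?F. complex_of_real (\<rho> (Prim d)) * a d) = complex_of_real (\<Sum>d\<in>?F. \<rho> (Prim d) * b d)"
      unfolding a_def by simp
    finally show ?thesis using B by simp
  qed
  have r0: "residue D \<sigma> \<iota> \<beta> (Inl v0) = 1"
  proof -
    obtain d0 where d0: "d0 \<in> D" "v0 = orb \<sigma> d0" using v0 by blast
    have "face_int D \<sigma> \<iota> \<beta> (Inl v0) = \<i> * complex_of_real (2 * pi)"
      using fiL[OF d0(1)] d0(2) ne by simp
    then show ?thesis unfolding residue_def by simp
  qed
  have r1: "residue D \<sigma> \<iota> \<beta> (Inl v1) = -1"
  proof -
    obtain d0 where d0: "d0 \<in> D" "v1 = orb \<sigma> d0" using v1 by blast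
    have "face_int D \<sigma> \<iota> \<beta> (Inl v1) = - (\<i> * complex_of_real (2 * pi))"
      using fiL[OF d0(1)] d0(2) ne by simp
    then show ?thesis unfolding residue_def by simp
  qed
  have mero: "meromorphic D \<sigma> \<iota> \<rho> {Inl v0, Inl v1} \<beta>"
    unfolding meromorphic_def
  proof (intro conjI ballI)
    show "one_form D \<iota> \<beta>" "type10 D \<iota> \<rho> \<beta>" unfolding \<beta>_def using mk_form[OF cm cs anti] by auto
  next
    fix u assume u: "u \<in> lverts D \<sigma> \<iota> - {Inl v0, Inl v1}"
    then have "u \<in> lverts D \<sigma> \<iota>" "u \<noteq> Inl v0" "u \<noteq> Inl v1" by auto
    then consider (l) d where "d \<in> D" "u = Inl (orb \<sigma> d)" | (r) d where "d \<in> D" "u = Inr (orb (\<sigma> \<circ> \<iota>) d)"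
      unfolding lverts_cases[OF cm cs] by blast
    then show "face_int D \<sigma> \<iota> \<beta> u = 0"
    proof cases
      case l
      then have "orb \<sigma> d \<noteq> v0" "orb \<sigma> d \<noteq> v1" using \<open>u \<noteq> Inl v0\<close> \<open>u \<noteq> Inl v1\<close> by auto
      then show ?thesis using fiL[OF l(1)] l(2) by simp
    next
      case r
      then show ?thesis using fiR unfolding \<phi>_def by simp
    qed
  next
    fix u :: "'a set + 'a set" assume "u \<in> {Inl v0, Inl v1}"
    then show "face_int D \<sigma> \<iota> \<beta> u \<noteq> 0" using r0 r1 unfolding residue_def by auto
  qed
  have hol: "Im (holonomy \<beta> \<gamma>) = 0" if lp: "is_loop D \<sigma> \<iota> \<gamma>" and av: "avoids_dual \<iota> \<gamma> lam" for \<gamma>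
  proof -
    obtain u where p: "is_path D \<sigma> \<iota> \<gamma> u u" using lp unfolding is_loop_def by blast
    define R :: "'a set + 'a set \<Rightarrow> real" where "R = (\<lambda>u. case u of Inl _ \<Rightarrow> 0 | Inr F \<Rightarrow> g F)"
    have "Im (\<beta> e) = R (lhead \<sigma> \<iota> e) - R (ltail \<sigma> \<iota> e)" if e: "e \<in> set \<gamma>" for e
    proof -
      have eD: "e \<in> ldarts D" using e p unfolding is_path_def by auto
      show ?thesis
      proof (cases e)
        case (Prim d)
        then show ?thesis using eD unfolding \<beta>_def a_def R_def by (auto simp: lhead_def)
      next
        case (Dual d)
        then have d: "d \<in> D" using eD by simp
        have "J d = 0" using J_avoid[OF cm cs av, of d] e Dual d unfolding J_def by simp
        then have "\<rho> (Prim d) * b d = g (\<phi> (\<iota> d)) - g (\<phi> d)"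
          unfolding b_def using conf_facts[OF cs d] by simp
        then show ?thesis using Dual d unfolding \<beta>_def a_def R_def \<phi>_def by (simp add: lhead_def)
      qed
    qed
    then have m: "map (Im \<circ> \<beta>) \<gamma> = map (\<lambda>z. R (lhead \<sigma> \<iota> z) - R (ltail \<sigma> \<iota> z)) \<gamma>"
      by (auto intro!: map_cong)
    have pp: "is_chain \<sigma> \<iota> \<gamma>" "\<gamma> \<noteq> []" using p unfolding is_path_def by auto
    have "Im (holonomy \<beta> \<gamma>) = sum_list (map (Im \<circ> \<beta>) \<gamma>)" unfolding holonomy_def Im_sum_list by simp
    also have "\<dots> = sum_list (map (\<lambda>z. R (lhead \<sigma> \<iota> z) - R (ltail \<sigma> \<iota> z)) \<gamma>)" by (simp only: m)
    also have "\<dots> = R (lhead \<sigma> \<iota> (last \<gamma>)) - R (ltail \<sigma> \<iota> (hd \<gamma>))" by (rule chain_telescope[OF pp])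
    finally show ?thesis using p unfolding is_path_def by simp
  qed
  show ?thesis using mero r0 r1 hol by blast
qed

end


context
  fixes D \<sigma> \<iota> \<rho>
  assumes cm: "comb_map D \<sigma> \<iota>" and cs: "conf_struct D \<iota> \<rho>"
begin

lemma diff_setup:
  assumes m1: "meromorphic D \<sigma> \<iota> \<rho> P \<alpha>1" and m2: "meromorphic D \<sigma> \<iota> \<rho> P \<alpha>2"
    and fi: "\<forall>u\<in>P. face_int D \<sigma> \<iota> \<alpha>1 u = face_int D \<sigma> \<iota> \<alpha>2 u"
  defines "a \<equiv> (\<lambda>d. \<alpha>1 (Prim d) - \<alpha>2 (Prim d))"
  shows "\<forall>d\<in>D. a (\<iota> d) = - a d"
    and "\<forall>e. \<alpha>1 e - \<alpha>2 e = mk D \<rho> a e"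
    and "\<forall>d\<in>D. (\<Sum>d'\<in>{d'\<in>D. orb \<sigma> d' = orb \<sigma> d}. complex_of_real (\<rho> (Prim d')) * a d') = 0"
    and "\<forall>d\<in>D. (\<Sum>d'\<in>{d'\<in>D. orb (\<sigma> \<circ> \<iota>) d' = orb (\<sigma> \<circ> \<iota>) d}. a d') = 0"
    and "\<forall>\<gamma>. holonomy \<alpha>1 \<gamma> - holonomy \<alpha>2 \<gamma> = holonomy (mk D \<rho> a) \<gamma>"
proof -
  have f1: "one_form D \<iota> \<alpha>1" "type10 D \<iota> \<rho> \<alpha>1" and f2: "one_form D \<iota> \<alpha>2" "type10 D \<iota> \<rho> \<alpha>2"
    using m1 m2 unfolding meromorphic_def by auto
  have e1: "\<alpha>1 = mk D \<rho> (\<lambda>d. \<alpha>1 (Prim d))" and e2: "\<alpha>2 = mk D \<rho> (\<lambda>d. \<alpha>2 (Prim d))"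
    using form_mk[OF cm cs f1] form_mk[OF cm cs f2] by auto
  show an: "\<forall>d\<in>D. a (\<iota> d) = - a d" unfolding a_def using form_mk(2)[OF cm cs f1] form_mk(2)[OF cm cs f2] by simp
  show ed: "\<forall>e. \<alpha>1 e - \<alpha>2 e = mk D \<rho> a e"
  proof
    fix e show "\<alpha>1 e - \<alpha>2 e = mk D \<rho> a e"
      by (subst e1, subst e2) (cases e; simp add: mk_def a_def algebra_simps)
  qed
  have dfi: "face_int D \<sigma> \<iota> (mk D \<rho> a) u = 0" if u: "u \<in> lverts D \<sigma> \<iota>" for u
  proof -
    have "face_int D \<sigma> \<iota> (mk D \<rho> a) u = face_int D \<sigma> \<iota> \<alpha>1 u - face_int D \<sigma> \<iota> \<alpha>2 u"
      unfolding face_int_def using ed by (simp add: sum_subtractf[symmetric])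
    moreover have "face_int D \<sigma> \<iota> \<alpha>1 u = face_int D \<sigma> \<iota> \<alpha>2 u"
    proof (cases "u \<in> P")
      case True then show ?thesis using fi by blast
    next
      case False then show ?thesis using m1 m2 u unfolding meromorphic_def by auto
    qed
    ultimately show ?thesis by simp
  qed
  show "\<forall>d\<in>D. (\<Sum>d'\<in>{d'\<in>D. orb \<sigma> d' = orb \<sigma> d}. complex_of_real (\<rho> (Prim d')) * a d') = 0"
  proof
    fix d assume "d \<in> D"
    then have "Inl (orb \<sigma> d) \<in> lverts D \<sigma> \<iota>" unfolding lverts_cases[OF cm cs] by blast
    then show "(\<Sum>d'\<in>{d'\<in>D. orb \<sigma> d' = orb \<sigma> d}. complex_of_real (\<rho> (Prim d')) * a d') = 0"
      using dfi fi_Inl[OF cm cs] by fastforce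
  qed
  show "\<forall>d\<in>D. (\<Sum>d'\<in>{d'\<in>D. orb (\<sigma> \<circ> \<iota>) d' = orb (\<sigma> \<circ> \<iota>) d}. a d') = 0"
  proof
    fix d assume "d \<in> D"
    then have "Inr (orb (\<sigma> \<circ> \<iota>) d) \<in> lverts D \<sigma> \<iota>" unfolding lverts_cases[OF cm cs] by blast
    then have "(\<Sum>d'\<in>{d'\<in>D. orb (\<sigma> \<circ> \<iota>) d' = orb (\<sigma> \<circ> \<iota>) d}. a (\<iota> d')) = 0"
      using dfi fi_Inr[OF cm cs] by fastforce
    moreover have "(\<Sum>d'\<in>{d'\<in>D. orb (\<sigma> \<circ> \<iota>) d' = orb (\<sigma> \<circ> \<iota>) d}. a (\<iota> d')) = - (\<Sum>d'\<in>{d'\<in>D. orb (\<sigma> \<circ> \<iota>) d' = orb (\<sigma> \<circ> \<iota>) d}. a d')"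
      using an by (simp add: sum_negf[symmetric])
    ultimately show "(\<Sum>d'\<in>{d'\<in>D. orb (\<sigma> \<circ> \<iota>) d' = orb (\<sigma> \<circ> \<iota>) d}. a d') = 0" by simp
  qed
  show "\<forall>\<gamma>. holonomy \<alpha>1 \<gamma> - holonomy \<alpha>2 \<gamma> = holonomy (mk D \<rho> a) \<gamma>"
  proof
    fix \<gamma> :: "'a ldart list"
    show "holonomy \<alpha>1 \<gamma> - holonomy \<alpha>2 \<gamma> = holonomy (mk D \<rho> a) \<gamma>"
      unfolding holonomy_def using ed[rule_format, symmetric] by (induction \<gamma>) (auto simp: algebra_simps)
  qed
qed

lemma prim_avoids: "set lam \<subseteq> Prim ` D \<Longrightarrow> set \<gamma> \<subseteq> Prim ` D \<Longrightarrow> avoids_dual \<iota> \<gamma> lam"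
  unfolding avoids_dual_def by fastforce

lemma mk_zero: "\<forall>d\<in>D. a d = 0 \<Longrightarrow> mk D \<rho> a e = 0"
  unfolding mk_def by (cases e) auto

lemma uniq_part:
  assumes lamP: "set lam \<subseteq> Prim ` D" and chain: "is_chain \<sigma> \<iota> lam"
    and dist: "distinct (map (ltail \<sigma> \<iota>) lam @ [x'])" and lst: "lam \<noteq> [] \<longrightarrow> lhead \<sigma> \<iota> (last lam) = x'"
    and m1: "meromorphic D \<sigma> \<iota> \<rho> P \<alpha>1" and m2: "meromorphic D \<sigma> \<iota> \<rho> P \<alpha>2"
    and fi: "\<forall>u\<in>P. face_int D \<sigma> \<iota> \<alpha>1 u = face_int D \<sigma> \<iota> \<alpha>2 u"
    and part: "part = Re \<or> part = Im"
    and h1: "\<forall>\<gamma>. is_loop D \<sigma> \<iota> \<gamma> \<and> avoids_dual \<iota> \<gamma> lam \<longrightarrow> part (holonomy \<alpha>1 \<gamma>) = 0"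
    and h2: "\<forall>\<gamma>. is_loop D \<sigma> \<iota> \<gamma> \<and> avoids_dual \<iota> \<gamma> lam \<longrightarrow> part (holonomy \<alpha>2 \<gamma>) = 0"
  shows "\<alpha>1 = \<alpha>2"
proof -
  define a where "a = (\<lambda>d. \<alpha>1 (Prim d) - \<alpha>2 (Prim d))"
  note ds0 = diff_setup[OF m1 m2 fi]
  have ds1: "\<forall>d\<in>D. a (\<iota> d) = - a d" unfolding a_def using ds0(1) .
  have ds2: "\<forall>e. \<alpha>1 e - \<alpha>2 e = mk D \<rho> a e" unfolding a_def using ds0(2) .
  have ds3: "\<forall>d\<in>D. (\<Sum>d'\<in>{d'\<in>D. orb \<sigma> d' = orb \<sigma> d}. complex_of_real (\<rho> (Prim d')) * a d') = 0" unfolding a_def using ds0(3) .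
  have ds4: "\<forall>d\<in>D. (\<Sum>d'\<in>{d'\<in>D. orb (\<sigma> \<circ> \<iota>) d' = orb (\<sigma> \<circ> \<iota>) d}. a d') = 0" unfolding a_def using ds0(4) .
  have ds5: "\<forall>\<gamma>. holonomy \<alpha>1 \<gamma> - holonomy \<alpha>2 \<gamma> = holonomy (mk D \<rho> a) \<gamma>" unfolding a_def using ds0(5) .
  note ds = ds1 ds2 ds3 ds4 ds5
  define w where "w = (\<lambda>e. part (mk D \<rho> a e))"
  have pl: "part (x - y) = part x - part y" "part (sum_list xs) = sum_list (map part xs)"
    "part (complex_of_real r * z) = r * part z" "part (sum f A) = sum (\<lambda>x. part (f x)) A" for x y xs r z f and A :: "'b set"
    using part by (auto simp: Re_sum_list Im_sum_list)
  have hl: "sum_list (map w \<gamma>) = 0" if "is_loop D \<sigma> \<iota> \<gamma>" "avoids_dual \<iota> \<gamma> lam" for \<gamma>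
  proof -
    have "sum_list (map w \<gamma>) = part (holonomy (mk D \<rho> a) \<gamma>)" unfolding w_def holonomy_def pl(2) by (simp add: comp_def)
    also have "\<dots> = part (holonomy \<alpha>1 \<gamma>) - part (holonomy \<alpha>2 \<gamma>)" using ds(5) pl(1) by metis
    also have "\<dots> = 0" using h1 h2 that by simp
    finally show ?thesis .
  qed
  have cc: "(\<Sum>d'\<in>{d'\<in>D. orb \<sigma> d' = orb \<sigma> d}. complex_of_real (\<rho> (Prim d')) * a d') = 0" if "d \<in> D" for d
    using ds(3) that by blast
  have cl: "(\<Sum>d'\<in>{d'\<in>D. orb (\<sigma> \<circ> \<iota>) d' = orb (\<sigma> \<circ> \<iota>) d}. a d') = 0" if "d \<in> D" for d
    using ds(4) that by blast
  have rhoF: "\<And>d. d \<in> D \<Longrightarrow> \<rho> (Prim d) > 0" using conf_facts[OF cs] by blast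
  have rhoN: "\<And>d. d \<in> D \<Longrightarrow> \<rho> (Prim d) \<noteq> 0" using rhoF by force
  have P1: "\<forall>d\<in>D. part (a d) = 0"
  proof -
    have "\<forall>d\<in>D. w (Prim d) = 0"
    proof (rule U1[OF cm cs])
      show "\<forall>d\<in>D. w (Prim (\<iota> d)) = - w (Prim d)"
        unfolding w_def using ds(1) cm_iota[OF cm] part by auto
      show "\<forall>\<gamma>. is_loop D \<sigma> \<iota> \<gamma> \<and> set \<gamma> \<subseteq> Prim ` D \<longrightarrow> sum_list (map w \<gamma>) = 0"
        using hl prim_avoids[OF lamP] by blast
      show "\<forall>d\<in>D. (\<Sum>d'\<in>{d'\<in>D. orb \<sigma> d' = orb \<sigma> d}. \<rho> (Prim d') * w (Prim d')) = 0"
      proof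
        fix d assume d: "d \<in> D"
        have "(\<Sum>d'\<in>{d'\<in>D. orb \<sigma> d' = orb \<sigma> d}. \<rho> (Prim d') * w (Prim d')) = part (\<Sum>d'\<in>{d'\<in>D. orb \<sigma> d' = orb \<sigma> d}. complex_of_real (\<rho> (Prim d')) * a d')"
          unfolding pl(4) pl(3) w_def by (rule sum.cong) auto
        then show "(\<Sum>d'\<in>{d'\<in>D. orb \<sigma> d' = orb \<sigma> d}. \<rho> (Prim d') * w (Prim d')) = 0"
          using cc[OF d] part by auto
      qed
    qed
    then show ?thesis unfolding w_def by simp
  qed
  define part' where "part' = (if part = Re then Im else Re)"
  have wd: "w (Dual d) = (if part = Re then - \<rho> (Prim d) * Im (a d) else \<rho> (Prim d) * Re (a d))" if "d \<in> D" for d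
    using that part unfolding w_def by auto
  have P2: "\<forall>d\<in>D. part' (a d) = 0"
  proof -
    have "\<forall>d\<in>D. w (Dual d) = 0"
    proof (rule U2[OF cm cs lamP chain dist lst])
      show "\<forall>d\<in>D. w (Dual (\<iota> d)) = - w (Dual d)"
        using wd ds(1) cm_iota[OF cm] conf_facts[OF cs] by auto
      show "\<forall>\<gamma>. is_loop D \<sigma> \<iota> \<gamma> \<and> avoids_dual \<iota> \<gamma> lam \<and> set \<gamma> \<subseteq> Dual ` D \<longrightarrow> sum_list (map w \<gamma>) = 0"
        using hl by blast
      show "\<forall>d\<in>D. (\<Sum>d'\<in>{d'\<in>D. orb \<sigma> d' = orb \<sigma> d}. w (Dual d')) = 0"
      proof
        fix d assume d: "d \<in> D"
        have "(\<Sum>d'\<in>{d'\<in>D. orb \<sigma> d' = orb \<sigma> d}. w (Dual d')) = (if part = Re then - Im (\<Sum>d'\<in>{d'\<in>D. orb \<sigma> d' = orb \<sigma> d}. complex_of_real (\<rho> (Prim d')) * a d') else Re (\<Sum>d'\<in>{d'\<in>D. orb \<sigma> d' = orb \<sigma> d}. complex_of_real (\<rho> (Prim d')) * a d'))"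
          by (auto simp: wd Re_sum Im_sum sum_negf intro!: sum.cong)
        then show "(\<Sum>d'\<in>{d'\<in>D. orb \<sigma> d' = orb \<sigma> d}. w (Dual d')) = 0" using cc[OF d] by simp
      qed
      show "\<forall>d\<in>D. (\<Sum>d'\<in>{d'\<in>D. orb (\<sigma> \<circ> \<iota>) d' = orb (\<sigma> \<circ> \<iota>) d}. w (Dual d') / \<rho> (Prim d')) = 0"
      proof
        fix d assume d: "d \<in> D"
        have "(\<Sum>d'\<in>{d'\<in>D. orb (\<sigma> \<circ> \<iota>) d' = orb (\<sigma> \<circ> \<iota>) d}. w (Dual d') / \<rho> (Prim d')) = (if part = Re then - Im (\<Sum>d'\<in>{d'\<in>D. orb (\<sigma> \<circ> \<iota>) d' = orb (\<sigma> \<circ> \<iota>) d}. a d') else Re (\<Sum>d'\<in>{d'\<in>D. orb (\<sigma> \<circ> \<iota>) d' = orb (\<sigma> \<circ> \<iota>) d}. a d'))"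
          using rhoF by (auto simp: wd Re_sum Im_sum sum_negf rhoN intro!: sum.cong)
        then show "(\<Sum>d'\<in>{d'\<in>D. orb (\<sigma> \<circ> \<iota>) d' = orb (\<sigma> \<circ> \<iota>) d}. w (Dual d') / \<rho> (Prim d')) = 0" using cl[OF d] by simp
      qed
    qed
    then show ?thesis unfolding part'_def using wd rhoN by (auto split: if_splits)
  qed
  have "\<forall>d\<in>D. a d = 0"
  proof
    fix d assume "d \<in> D"
    then have "part (a d) = 0" "part' (a d) = 0" using P1 P2 by auto
    have ImRe: "Im \<noteq> Re"
    proof
      assume "Im = Re" then have "Im \<i> = Re \<i>" by simp
      then show False by simp
    qed
    then show "a d = 0" using part \<open>part (a d) = 0\<close> \<open>part' (a d) = 0\<close> unfolding part'_def by (auto simp: complex_eq_iff)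
  qed
  then have "\<forall>e. \<alpha>1 e - \<alpha>2 e = 0" using ds(2) mk_zero by metis
  then show ?thesis by auto
qed

end


lemma fi_from_res: "residue D \<sigma> \<iota> \<alpha> u = r \<Longrightarrow> face_int D \<sigma> \<iota> \<alpha> u = r * (2 * \<i> * complex_of_real pi)"
proof -
  assume a: "residue D \<sigma> \<iota> \<alpha> u = r"
  have "2 * \<i> * complex_of_real pi \<noteq> 0" by simp
  then show ?thesis using a unfolding residue_def by (simp add: divide_eq_eq)
qed

lemma core_primal:
  fixes D :: "'d set" and \<sigma> \<iota> :: "'d \<Rightarrow> 'd" and \<rho> :: "'d ldart \<Rightarrow> real"
    and x x' :: "'d set + 'd set" and lam :: "'d ldart list"
  assumes cm: "comb_map D \<sigma> \<iota>"
    and cs: "conf_struct D \<iota> \<rho>"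
    and xv: "x \<in> lverts D \<sigma> \<iota>" and xv': "x' \<in> lverts D \<sigma> \<iota>" and ne: "x \<noteq> x'"
    and sp: "simple_path D \<sigma> \<iota> lam x x'"
    and xl: "x = Inl v0"
  shows "\<exists>!ab. case ab of (\<alpha>, \<beta>) \<Rightarrow>
           meromorphic D \<sigma> \<iota> \<rho> {x, x'} \<alpha> \<and>
           residue D \<sigma> \<iota> \<alpha> x = 1 \<and> residue D \<sigma> \<iota> \<alpha> x' = -1 \<and>
           meromorphic D \<sigma> \<iota> \<rho> {x, x'} \<beta> \<and>
           residue D \<sigma> \<iota> \<beta> x = 1 \<and> residue D \<sigma> \<iota> \<beta> x' = -1 \<and>
           (\<forall>\<gamma>. is_loop D \<sigma> \<iota> \<gamma> \<and> avoids_dual \<iota> \<gamma> lam \<longrightarrow>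
              Re (holonomy \<alpha> \<gamma>) = 0 \<and> Im (holonomy \<beta> \<gamma>) = 0)"
proof -
  have ip: "is_path D \<sigma> \<iota> lam x x'" and dm: "distinct (map (ltail \<sigma> \<iota>) lam @ [x'])"
    using sp unfolding simple_path_def by auto
  have lne: "lam \<noteq> []" and lD: "set lam \<subseteq> ldarts D" and ch: "is_chain \<sigma> \<iota> lam"
    and hd: "ltail \<sigma> \<iota> (hd lam) = x" and lst: "lhead \<sigma> \<iota> (last lam) = x'"
    using ip unfolding is_path_def by auto
  obtain v1 where lamP: "set lam \<subseteq> Prim ` D" and x'l: "x' = Inl v1"
    using layer_prim[OF ch lD lne hd[unfolded xl]] lst by auto
  have v0: "v0 \<in> orb \<sigma> ` D" using xv xl unfolding lverts_cases[OF cm cs] by auto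
  have v1: "v1 \<in> orb \<sigma> ` D" using xv' x'l unfolding lverts_cases[OF cm cs] by auto
  have ne01: "v0 \<noteq> v1" using ne xl x'l by auto
  have dl: "distinct lam" using dm by (simp add: distinct_map)
  obtain \<alpha> where \<alpha>: "meromorphic D \<sigma> \<iota> \<rho> {Inl v0, Inl v1} \<alpha>" "residue D \<sigma> \<iota> \<alpha> (Inl v0) = 1"
      "residue D \<sigma> \<iota> \<alpha> (Inl v1) = -1" "\<forall>\<gamma>. is_loop D \<sigma> \<iota> \<gamma> \<longrightarrow> Re (holonomy \<alpha> \<gamma>) = 0"
    using exists_alpha[OF cm cs v0 v1 ne01] by blast
  obtain \<beta> where \<beta>: "meromorphic D \<sigma> \<iota> \<rho> {Inl v0, Inl v1} \<beta>" "residue D \<sigma> \<iota> \<beta> (Inl v0) = 1"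
      "residue D \<sigma> \<iota> \<beta> (Inl v1) = -1" "\<forall>\<gamma>. is_loop D \<sigma> \<iota> \<gamma> \<and> avoids_dual \<iota> \<gamma> lam \<longrightarrow> Im (holonomy \<beta> \<gamma>) = 0"
    using exists_beta[OF cm cs v0 v1 ne01 lamP ch lne hd[unfolded xl] lst[unfolded x'l] dl] by blast
  define Q where "Q = (\<lambda>ab. case ab of (\<alpha>, \<beta>) \<Rightarrow>
           meromorphic D \<sigma> \<iota> \<rho> {x, x'} \<alpha> \<and>
           residue D \<sigma> \<iota> \<alpha> x = 1 \<and> residue D \<sigma> \<iota> \<alpha> x' = -1 \<and>
           meromorphic D \<sigma> \<iota> \<rho> {x, x'} \<beta> \<and>
           residue D \<sigma> \<iota> \<beta> x = 1 \<and> residue D \<sigma> \<iota> \<beta> x' = -1 \<and>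
           (\<forall>\<gamma>. is_loop D \<sigma> \<iota> \<gamma> \<and> avoids_dual \<iota> \<gamma> lam \<longrightarrow>
              Re (holonomy \<alpha> \<gamma>) = 0 \<and> Im (holonomy \<beta> \<gamma>) = 0))"
  have Qab: "Q (\<alpha>, \<beta>)" unfolding Q_def using \<alpha> \<beta> xl x'l by auto
  have lst': "lam \<noteq> [] \<longrightarrow> lhead \<sigma> \<iota> (last lam) = x'" using lst by simp
  have uniq: "y = (\<alpha>, \<beta>)" if Qy: "Q y" for y
  proof -
    obtain \<alpha>' \<beta>' where y: "y = (\<alpha>', \<beta>')" by (cases y)
    have q: "meromorphic D \<sigma> \<iota> \<rho> {x, x'} \<alpha>'" "residue D \<sigma> \<iota> \<alpha>' x = 1" "residue D \<sigma> \<iota> \<alpha>' x' = -1"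
      "meromorphic D \<sigma> \<iota> \<rho> {x, x'} \<beta>'" "residue D \<sigma> \<iota> \<beta>' x = 1" "residue D \<sigma> \<iota> \<beta>' x' = -1"
      "\<forall>\<gamma>. is_loop D \<sigma> \<iota> \<gamma> \<and> avoids_dual \<iota> \<gamma> lam \<longrightarrow> Re (holonomy \<alpha>' \<gamma>) = 0 \<and> Im (holonomy \<beta>' \<gamma>) = 0"
      using Qy unfolding Q_def y by auto
    have ma: "meromorphic D \<sigma> \<iota> \<rho> {x, x'} \<alpha>" using \<alpha>(1) xl x'l by simp
    have mb: "meromorphic D \<sigma> \<iota> \<rho> {x, x'} \<beta>" using \<beta>(1) xl x'l by simp
    have fa: "\<forall>u\<in>{x, x'}. face_int D \<sigma> \<iota> \<alpha>' u = face_int D \<sigma> \<iota> \<alpha> u"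
      using fi_from_res[OF q(2)] fi_from_res[OF q(3)] fi_from_res[OF \<alpha>(2)] fi_from_res[OF \<alpha>(3)] xl x'l by simp
    have fb: "\<forall>u\<in>{x, x'}. face_int D \<sigma> \<iota> \<beta>' u = face_int D \<sigma> \<iota> \<beta> u"
      using fi_from_res[OF q(5)] fi_from_res[OF q(6)] fi_from_res[OF \<beta>(2)] fi_from_res[OF \<beta>(3)] xl x'l by simp
    have ha1: "\<forall>\<gamma>. is_loop D \<sigma> \<iota> \<gamma> \<and> avoids_dual \<iota> \<gamma> lam \<longrightarrow> Re (holonomy \<alpha>' \<gamma>) = 0" using q(7) by blast
    have ha2: "\<forall>\<gamma>. is_loop D \<sigma> \<iota> \<gamma> \<and> avoids_dual \<iota> \<gamma> lam \<longrightarrow> Re (holonomy \<alpha> \<gamma>) = 0" using \<alpha>(4) by blast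
    have hb1: "\<forall>\<gamma>. is_loop D \<sigma> \<iota> \<gamma> \<and> avoids_dual \<iota> \<gamma> lam \<longrightarrow> Im (holonomy \<beta>' \<gamma>) = 0" using q(7) by blast
    have hb2: "\<forall>\<gamma>. is_loop D \<sigma> \<iota> \<gamma> \<and> avoids_dual \<iota> \<gamma> lam \<longrightarrow> Im (holonomy \<beta> \<gamma>) = 0" using \<beta>(4) by blast
    have pRe: "Re = Re \<or> Re = Im" by simp
    have pIm: "Im = Re \<or> Im = Im" by simp
    have a1: "\<alpha>' = \<alpha>" by (rule uniq_part[OF cm cs lamP ch dm lst' q(1) ma fa pRe ha1 ha2])
    have b1: "\<beta>' = \<beta>" by (rule uniq_part[OF cm cs lamP ch dm lst' q(4) mb fb pIm hb1 hb2])
    show ?thesis using y a1 b1 by simp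
  qed
  have "\<exists>!ab. Q ab" by (rule ex1I[of Q "(\<alpha>, \<beta>)", OF Qab uniq])
  then show ?thesis by (simp only: Q_def)
qed


fun sw :: "'a + 'a \<Rightarrow> 'a + 'a" where
  "sw (Inl a) = Inr a" | "sw (Inr a) = Inl a"

lemma sw_sw[simp]: "sw (sw u) = u" by (cases u) auto
lemma sw_inj: "sw u = sw v \<longleftrightarrow> u = v" by (metis sw_sw)

fun Ph :: "'d ldart \<Rightarrow> 'd ldart" where
  "Ph (Prim d) = Dual d" | "Ph (Dual d) = Prim d"

lemma Ph_Ph[simp]: "Ph (Ph x) = x" by (cases x) auto
lemma Ph_inj: "Ph x = Ph y \<longleftrightarrow> x = y" by (metis Ph_Ph)
lemma Ph_ldarts[simp]: "Ph x \<in> ldarts D \<longleftrightarrow> x \<in> ldarts D" by (cases x) auto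
lemma Ph_lrev: "lrev \<iota> (Ph x) = Ph (lrev \<iota> x)" by (cases x) auto
lemma map_Ph_Ph[simp]: "map Ph (map Ph xs) = xs" by (induction xs) auto

definition TT :: "('d ldart \<Rightarrow> complex) \<Rightarrow> 'd ldart \<Rightarrow> complex" where
  "TT \<alpha> = (\<lambda>x. cnj (\<alpha> (Ph x)))"

lemma TT_TT[simp]: "TT (TT \<alpha>) = \<alpha>" unfolding TT_def by simp

lemma lrev_inv: "\<forall>d\<in>D. \<iota> d \<in> D \<and> \<iota> (\<iota> d) = d \<Longrightarrow> x \<in> ldarts D \<Longrightarrow> lrev \<iota> (lrev \<iota> x) = x \<and> lrev \<iota> x \<in> ldarts D"
  by (cases x) auto

lemma lstar_ldarts: "\<forall>d\<in>D. \<iota> d \<in> D \<and> \<iota> (\<iota> d) = d \<Longrightarrow> x \<in> ldarts D \<Longrightarrow> lstar \<iota> x \<in> ldarts D"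
  by (cases x) auto

lemma Ph_lstar: "\<forall>d\<in>D. \<iota> d \<in> D \<and> \<iota> (\<iota> d) = d \<Longrightarrow> x \<in> ldarts D \<Longrightarrow> Ph (lstar \<iota> x) = lrev \<iota> (lstar \<iota> (Ph x))"
  by (cases x) auto

lemma one_form_TT:
  assumes inv: "\<forall>d\<in>D. \<iota> d \<in> D \<and> \<iota> (\<iota> d) = d" and of: "one_form D \<iota> \<alpha>"
  shows "one_form D \<iota> (TT \<alpha>)"
  unfolding one_form_def TT_def
proof (intro conjI ballI allI impI)
  fix x assume "x \<in> ldarts D"
  then have "Ph x \<in> ldarts D" by simp
  then show "cnj (\<alpha> (Ph (lrev \<iota> x))) = - cnj (\<alpha> (Ph x))"
    using of unfolding one_form_def by (simp add: Ph_lrev[symmetric])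
next
  fix x :: "'a ldart" assume "x \<notin> ldarts D"
  then show "cnj (\<alpha> (Ph x)) = 0" using of unfolding one_form_def by simp
qed

lemma conf_TT:
  assumes inv: "\<forall>d\<in>D. \<iota> d \<in> D \<and> \<iota> (\<iota> d) = d" and c: "conf_struct D \<iota> \<rho>"
  shows "conf_struct D \<iota> (\<rho> \<circ> Ph)"
  unfolding conf_struct_def
proof (intro ballI conjI)
  fix x assume x: "x \<in> ldarts D"
  have px: "Ph x \<in> ldarts D" using x by simp
  show "(\<rho> \<circ> Ph) x > 0" using c px unfolding conf_struct_def by auto
  show "(\<rho> \<circ> Ph) (lrev \<iota> x) = (\<rho> \<circ> Ph) x" using c px unfolding conf_struct_def by (simp add: Ph_lrev[symmetric])
  have ls: "lstar \<iota> (Ph x) \<in> ldarts D" using lstar_ldarts[OF inv px] .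
  have "(\<rho> \<circ> Ph) (lstar \<iota> x) = \<rho> (lrev \<iota> (lstar \<iota> (Ph x)))" using Ph_lstar[OF inv x] by simp
  also have "\<dots> = \<rho> (lstar \<iota> (Ph x))" using c ls unfolding conf_struct_def by auto
  finally show "(\<rho> \<circ> Ph) x * (\<rho> \<circ> Ph) (lstar \<iota> x) = 1" using c px unfolding conf_struct_def by auto
qed

lemma type10_TT:
  assumes inv: "\<forall>d\<in>D. \<iota> d \<in> D \<and> \<iota> (\<iota> d) = d" and of: "one_form D \<iota> \<alpha>" and t: "type10 D \<iota> \<rho> \<alpha>"
    and c: "conf_struct D \<iota> \<rho>"
  shows "type10 D \<iota> (\<rho> \<circ> Ph) (TT \<alpha>)"
  unfolding type10_def
proof
  fix x assume x: "x \<in> ldarts D"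
  have px: "Ph x \<in> ldarts D" using x by simp
  have ls: "lstar \<iota> (Ph x) \<in> ldarts D" using lstar_ldarts[OF inv px] .
  have r: "\<rho> (lrev \<iota> (lstar \<iota> (Ph x))) = \<rho> (lstar \<iota> (Ph x))" using c ls unfolding conf_struct_def by auto
  have a: "\<alpha> (lrev \<iota> (lstar \<iota> (Ph x))) = - \<alpha> (lstar \<iota> (Ph x))" using of ls unfolding one_form_def by auto
  have h: "- complex_of_real (\<rho> (lstar \<iota> (Ph x))) * \<alpha> (lstar \<iota> (Ph x)) = - \<i> * \<alpha> (Ph x)"
    using t px unfolding type10_def hodge_def by auto
  have "hodge \<iota> (\<rho> \<circ> Ph) (TT \<alpha>) x = complex_of_real (\<rho> (lstar \<iota> (Ph x))) * cnj (\<alpha> (lstar \<iota> (Ph x)))"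
    unfolding hodge_def TT_def using Ph_lstar[OF inv x] r a by simp
  also have "\<dots> = cnj (complex_of_real (\<rho> (lstar \<iota> (Ph x))) * \<alpha> (lstar \<iota> (Ph x)))" by simp
  also have "\<dots> = cnj (\<i> * \<alpha> (Ph x))" using h by (metis minus_mult_left neg_equal_iff_equal)
  also have "\<dots> = - \<i> * TT \<alpha> x" unfolding TT_def by simp
  finally show "hodge \<iota> (\<rho> \<circ> Ph) (TT \<alpha>) x = - \<i> * TT \<alpha> x" .
qed

lemma conf_TT_back: "\<rho> \<circ> Ph \<circ> Ph = \<rho>" by (rule ext) simp


context
  fixes D \<sigma> \<iota>
  assumes cm: "comb_map D \<sigma> \<iota>"
begin

lemma inv': "\<forall>d\<in>D. \<iota> d \<in> D \<and> \<iota> (\<iota> d) = d" using cm_iota[OF cm] by blast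

lemma cm_T: "comb_map D (\<sigma> \<circ> \<iota>) \<iota>"
proof -
  let ?R = "{(a, b). b = (\<sigma> \<circ> \<iota>) a \<or> b = \<iota> a}"
  have conn: "(d, d') \<in> ?R\<^sup>*" if d: "d \<in> D" "d' \<in> D" for d d'
  proof -
    have "(d, d') \<in> {(a, b). b = \<sigma> a \<or> b = \<iota> a}\<^sup>*" using cm d unfolding comb_map_def by blast
    then have "(d, d') \<in> ?R\<^sup>* \<and> d' \<in> D"
    proof (induction rule: rtrancl_induct)
      case base then show ?case using d by simp
    next
      case (step y z)
      then have y: "(d, y) \<in> ?R\<^sup>*" "y \<in> D" "z = \<sigma> y \<or> z = \<iota> y" by auto
      have iy: "\<iota> y \<in> D" "\<iota> (\<iota> y) = y" using cm_iota[OF cm y(2)] by auto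
      show ?case
      proof (cases "z = \<sigma> y")
        case True
        have "(y, \<iota> y) \<in> ?R" by simp
        moreover have "(\<iota> y, z) \<in> ?R" using True iy by simp
        ultimately have "(y, z) \<in> ?R\<^sup>*" by (meson converse_rtrancl_into_rtrancl r_into_rtrancl)
        then show ?thesis using y True cm_sigma[OF cm y(2)] by (meson rtrancl_trans)
      next
        case False
        then have "z = \<iota> y" using y by simp
        then have "(y, z) \<in> ?R" by simp
        then show ?thesis using y iy \<open>z = \<iota> y\<close> by (meson rtrancl_into_rtrancl)
      qed
    qed
    then show ?thesis by blast
  qed
  show ?thesis using cm cm_bij_si[OF cm] conn unfolding comb_map_def by blast
qed

lemma orb_T: "d \<in> D \<Longrightarrow> orb (\<sigma> \<circ> \<iota> \<circ> \<iota>) d = orb \<sigma> d"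
  by (rule orb_cong) (use cm_iota[OF cm] cm_sigma[OF cm] in auto)

lemma ltail_T: "x \<in> ldarts D \<Longrightarrow> ltail (\<sigma> \<circ> \<iota>) \<iota> x = sw (ltail \<sigma> \<iota> (Ph x))"
  by (cases x) (auto simp: orb_T)

lemma lhead_T: "x \<in> ldarts D \<Longrightarrow> lhead (\<sigma> \<circ> \<iota>) \<iota> x = sw (lhead \<sigma> \<iota> (Ph x))"
  unfolding lhead_def using ltail_T lrev_inv[OF inv'] by (metis Ph_lrev)

lemma lverts_T: "lverts D (\<sigma> \<circ> \<iota>) \<iota> = sw ` lverts D \<sigma> \<iota>"
proof -
  have "(\<lambda>d. Inr (orb (\<sigma> \<circ> \<iota> \<circ> \<iota>) d)) ` D = (\<lambda>d. Inr (orb \<sigma> d)) ` D"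
    by (rule image_cong) (auto simp: orb_T)
  then show ?thesis unfolding lverts_def by (auto simp: image_Un image_image)
qed

lemma chain_T: "set xs \<subseteq> ldarts D \<Longrightarrow> is_chain (\<sigma> \<circ> \<iota>) \<iota> (map Ph xs) \<longleftrightarrow> is_chain \<sigma> \<iota> xs"
proof (induction xs)
  case (Cons y ys)
  show ?case
  proof (cases ys)
    case Nil then show ?thesis by simp
  next
    case (Cons a list)
    have yD: "y \<in> ldarts D" "a \<in> ldarts D" "set ys \<subseteq> ldarts D" using Cons Cons.prems by auto
    have h: "lhead (\<sigma> \<circ> \<iota>) \<iota> (Ph y) = sw (lhead \<sigma> \<iota> y)" using lhead_T[of "Ph y"] yD by simp
    have t: "ltail (\<sigma> \<circ> \<iota>) \<iota> (Ph a) = sw (ltail \<sigma> \<iota> a)" using ltail_T[of "Ph a"] yD by simp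
    have "is_chain (\<sigma> \<circ> \<iota>) \<iota> (map Ph (y # ys)) = (lhead (\<sigma> \<circ> \<iota>) \<iota> (Ph y) = ltail (\<sigma> \<circ> \<iota>) \<iota> (Ph a) \<and> is_chain (\<sigma> \<circ> \<iota>) \<iota> (map Ph ys))"
      unfolding Cons by (simp only: list.map is_chain.simps)
    also have "\<dots> = (lhead \<sigma> \<iota> y = ltail \<sigma> \<iota> a \<and> is_chain \<sigma> \<iota> ys)"
      by (simp only: h t sw_inj Cons.IH[OF yD(3)])
    also have "\<dots> = is_chain \<sigma> \<iota> (y # ys)" unfolding Cons by simp
    finally show ?thesis .
  qed
qed simp

lemma path_T: "is_path D (\<sigma> \<circ> \<iota>) \<iota> (map Ph xs) u v \<longleftrightarrow> is_path D \<sigma> \<iota> xs (sw u) (sw v)"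
proof (cases "xs = [] \<or> \<not> set xs \<subseteq> ldarts D")
  case True
  then show ?thesis unfolding is_path_def by auto
next
  case False
  then have ne: "xs \<noteq> []" and sD: "set xs \<subseteq> ldarts D" by auto
  have "hd xs \<in> ldarts D" "last xs \<in> ldarts D" using ne sD by auto
  then have "ltail (\<sigma> \<circ> \<iota>) \<iota> (hd (map Ph xs)) = sw (ltail \<sigma> \<iota> (hd xs))"
    "lhead (\<sigma> \<circ> \<iota>) \<iota> (last (map Ph xs)) = sw (lhead \<sigma> \<iota> (last xs))"
    using ne by (simp_all add: ltail_T lhead_T hd_map last_map)
  moreover have "set (map Ph xs) \<subseteq> ldarts D" using sD by auto
  ultimately show ?thesis unfolding is_path_def using chain_T[OF sD] ne sD
    by (metis Nil_is_map_conv sw_sw)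
qed

lemma loop_T: "is_loop D (\<sigma> \<circ> \<iota>) \<iota> (map Ph xs) \<longleftrightarrow> is_loop D \<sigma> \<iota> xs"
  unfolding is_loop_def path_T by (metis sw_sw)

lemma avoids_T:
  assumes "set lam \<subseteq> ldarts D"
  shows "avoids_dual \<iota> (map Ph \<gamma>) (map Ph lam) \<longleftrightarrow> avoids_dual \<iota> \<gamma> lam"
proof -
  have k: "Ph y \<noteq> lstar \<iota> (Ph z) \<and> Ph y \<noteq> lrev \<iota> (lstar \<iota> (Ph z)) \<longleftrightarrow> y \<noteq> lstar \<iota> z \<and> y \<noteq> lrev \<iota> (lstar \<iota> z)"
    if z: "z \<in> set lam" for y z
  proof -
    have zD: "z \<in> ldarts D" using z assms by auto
    have pz: "Ph z \<in> ldarts D" using zD by simp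
    have ls: "lstar \<iota> z \<in> ldarts D" using lstar_ldarts[OF inv' zD] .
    have e1: "lstar \<iota> (Ph z) = Ph (lrev \<iota> (lstar \<iota> z))" using Ph_lstar[OF inv' pz] by (metis Ph_Ph)
    have e2: "lrev \<iota> (lstar \<iota> (Ph z)) = Ph (lstar \<iota> z)"
      unfolding e1 Ph_lrev using lrev_inv[OF inv' ls] by simp
    show ?thesis unfolding e2 unfolding e1 Ph_inj by blast
  qed
  show ?thesis unfolding avoids_dual_def using k by auto
qed

lemma simple_T: "simple_path D \<sigma> \<iota> lam x x' \<Longrightarrow> simple_path D (\<sigma> \<circ> \<iota>) \<iota> (map Ph lam) (sw x) (sw x')"
proof -
  assume sp: "simple_path D \<sigma> \<iota> lam x x'"
  then have p: "is_path D \<sigma> \<iota> lam x x'" and d: "distinct (map (ltail \<sigma> \<iota>) lam @ [x'])"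
    unfolding simple_path_def by auto
  have sD: "set lam \<subseteq> ldarts D" using p unfolding is_path_def by auto
  have "map (ltail (\<sigma> \<circ> \<iota>) \<iota>) (map Ph lam) = map sw (map (ltail \<sigma> \<iota>) lam)"
    unfolding map_map
  proof (rule map_cong[OF refl])
    fix z assume "z \<in> set lam"
    then have "Ph z \<in> ldarts D" using sD by auto
    then show "(ltail (\<sigma> \<circ> \<iota>) \<iota> \<circ> Ph) z = (sw \<circ> ltail \<sigma> \<iota>) z" using ltail_T[of "Ph z"] by simp
  qed
  then have eq: "map (ltail (\<sigma> \<circ> \<iota>) \<iota>) (map Ph lam) @ [sw x'] = map sw (map (ltail \<sigma> \<iota>) lam @ [x'])" by simp
  have "distinct (map sw (map (ltail \<sigma> \<iota>) lam @ [x']))"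
    using d by (simp only: distinct_map) (metis inj_on_def sw_inj)
  then have dd: "distinct (map (ltail (\<sigma> \<circ> \<iota>) \<iota>) (map Ph lam) @ [sw x'])" by (simp only: eq)
  have "is_path D (\<sigma> \<circ> \<iota>) \<iota> (map Ph lam) (sw x) (sw x')" using path_T[of lam "sw x" "sw x'"] p by simp
  then show ?thesis unfolding simple_path_def using dd by blast
qed

lemma fi_T:
  assumes of: "one_form D \<iota> \<alpha>"
  shows "face_int D (\<sigma> \<circ> \<iota>) \<iota> (TT \<alpha>) u = - cnj (face_int D \<sigma> \<iota> \<alpha> (sw u))"
proof -
  let ?S = "{y \<in> ldarts D. ltail \<sigma> \<iota> y = sw u}"
  have set: "{x \<in> ldarts D. ltail (\<sigma> \<circ> \<iota>) \<iota> x = u} = Ph ` ?S"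
  proof
    show "{x \<in> ldarts D. ltail (\<sigma> \<circ> \<iota>) \<iota> x = u} \<subseteq> Ph ` ?S"
    proof
      fix x assume x: "x \<in> {x \<in> ldarts D. ltail (\<sigma> \<circ> \<iota>) \<iota> x = u}"
      then have "Ph x \<in> ?S" using ltail_T by auto
      then show "x \<in> Ph ` ?S" by (metis Ph_Ph image_eqI)
    qed
    show "Ph ` ?S \<subseteq> {x \<in> ldarts D. ltail (\<sigma> \<circ> \<iota>) \<iota> x = u}"
      using ltail_T by auto
  qed
  have inj: "inj_on Ph ?S" by (metis Ph_inj inj_onI)
  have "face_int D (\<sigma> \<circ> \<iota>) \<iota> (TT \<alpha>) u = (\<Sum>y\<in>?S. TT \<alpha> (lstar \<iota> (Ph y)))"
    unfolding face_int_def set by (simp add: sum.reindex[OF inj])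
  also have "\<dots> = (\<Sum>y\<in>?S. - cnj (\<alpha> (lstar \<iota> y)))"
  proof (rule sum.cong[OF refl])
    fix y assume y: "y \<in> ?S"
    then have yD: "y \<in> ldarts D" by simp
    have "Ph (lstar \<iota> (Ph y)) = lrev \<iota> (lstar \<iota> y)" using Ph_lstar[OF inv', of "Ph y"] yD by simp
    moreover have "\<alpha> (lrev \<iota> (lstar \<iota> y)) = - \<alpha> (lstar \<iota> y)"
      using of lstar_ldarts[OF inv' yD] unfolding one_form_def by auto
    ultimately show "TT \<alpha> (lstar \<iota> (Ph y)) = - cnj (\<alpha> (lstar \<iota> y))" unfolding TT_def by simp
  qed
  also have "\<dots> = - cnj (face_int D \<sigma> \<iota> \<alpha> (sw u))" unfolding face_int_def by (simp add: sum_negf)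
  finally show ?thesis .
qed

lemma res_T: "one_form D \<iota> \<alpha> \<Longrightarrow> residue D (\<sigma> \<circ> \<iota>) \<iota> (TT \<alpha>) u = cnj (residue D \<sigma> \<iota> \<alpha> (sw u))"
  unfolding residue_def using fi_T by (simp add: field_simps)

lemma hol_T: "holonomy (TT \<alpha>) (map Ph \<gamma>) = cnj (holonomy \<alpha> \<gamma>)"
  unfolding holonomy_def TT_def by (induction \<gamma>) auto

end


lemma Ph_o_Ph[simp]: "Ph \<circ> Ph = id" by (rule ext) simp

context
  fixes D \<sigma> \<iota> \<rho>
  assumes cm: "comb_map D \<sigma> \<iota>" and cs: "conf_struct D \<iota> \<rho>"
begin

lemma mero_T:
  "meromorphic D (\<sigma> \<circ> \<iota>) \<iota> (\<rho> \<circ> Ph) {sw x, sw x'} (TT \<alpha>) \<longleftrightarrow> meromorphic D \<sigma> \<iota> \<rho> {x, x'} \<alpha>"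
proof
  have inv: "\<forall>d\<in>D. \<iota> d \<in> D \<and> \<iota> (\<iota> d) = d" using inv'[OF cm] .
  have cs': "conf_struct D \<iota> (\<rho> \<circ> Ph)" using conf_TT[OF inv cs] .
  assume m: "meromorphic D (\<sigma> \<circ> \<iota>) \<iota> (\<rho> \<circ> Ph) {sw x, sw x'} (TT \<alpha>)"
  have of': "one_form D \<iota> (TT \<alpha>)" "type10 D \<iota> (\<rho> \<circ> Ph) (TT \<alpha>)" using m unfolding meromorphic_def by auto
  have of: "one_form D \<iota> \<alpha>" using one_form_TT[OF inv of'(1)] by simp
  have t: "type10 D \<iota> \<rho> \<alpha>" using type10_TT[OF inv of' cs'] by (simp add: conf_TT_back)
  show "meromorphic D \<sigma> \<iota> \<rho> {x, x'} \<alpha>"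
    unfolding meromorphic_def
  proof (intro conjI ballI)
    show "one_form D \<iota> \<alpha>" "type10 D \<iota> \<rho> \<alpha>" using of t .
  next
    fix w assume w: "w \<in> lverts D \<sigma> \<iota> - {x, x'}"
    then have "sw w \<in> lverts D (\<sigma> \<circ> \<iota>) \<iota> - {sw x, sw x'}" using lverts_T[OF cm] by (auto simp: sw_inj)
    then have "face_int D (\<sigma> \<circ> \<iota>) \<iota> (TT \<alpha>) (sw w) = 0" using m unfolding meromorphic_def by blast
    then show "face_int D \<sigma> \<iota> \<alpha> w = 0" using fi_T[OF cm of, of "sw w"] by simp
  next
    fix w assume w: "w \<in> {x, x'}"
    then have "sw w \<in> {sw x, sw x'}" by auto
    then have "face_int D (\<sigma> \<circ> \<iota>) \<iota> (TT \<alpha>) (sw w) \<noteq> 0" using m unfolding meromorphic_def by blast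
    then show "face_int D \<sigma> \<iota> \<alpha> w \<noteq> 0" using fi_T[OF cm of, of "sw w"] by auto
  qed
next
  have inv: "\<forall>d\<in>D. \<iota> d \<in> D \<and> \<iota> (\<iota> d) = d" using inv'[OF cm] .
  assume m: "meromorphic D \<sigma> \<iota> \<rho> {x, x'} \<alpha>"
  have of: "one_form D \<iota> \<alpha>" "type10 D \<iota> \<rho> \<alpha>" using m unfolding meromorphic_def by auto
  show "meromorphic D (\<sigma> \<circ> \<iota>) \<iota> (\<rho> \<circ> Ph) {sw x, sw x'} (TT \<alpha>)"
    unfolding meromorphic_def
  proof (intro conjI ballI)
    show "one_form D \<iota> (TT \<alpha>)" using one_form_TT[OF inv of(1)] .
    show "type10 D \<iota> (\<rho> \<circ> Ph) (TT \<alpha>)" using type10_TT[OF inv of cs] .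
  next
    fix u assume u: "u \<in> lverts D (\<sigma> \<circ> \<iota>) \<iota> - {sw x, sw x'}"
    then have "sw u \<in> lverts D \<sigma> \<iota> - {x, x'}" using lverts_T[OF cm] by (auto simp: sw_inj)
    then have "face_int D \<sigma> \<iota> \<alpha> (sw u) = 0" using m unfolding meromorphic_def by blast
    then show "face_int D (\<sigma> \<circ> \<iota>) \<iota> (TT \<alpha>) u = 0" using fi_T[OF cm of(1), of u] by simp
  next
    fix u assume u: "u \<in> {sw x, sw x'}"
    then have "sw u \<in> {x, x'}" by auto
    then have "face_int D \<sigma> \<iota> \<alpha> (sw u) \<noteq> 0" using m unfolding meromorphic_def by blast
    then show "face_int D (\<sigma> \<circ> \<iota>) \<iota> (TT \<alpha>) u \<noteq> 0" using fi_T[OF cm of(1), of u] by auto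
  qed
qed

lemma cnj_eq_iff: "cnj z = w \<longleftrightarrow> z = cnj w" by auto

lemma Q_T:
  assumes lD: "set lam \<subseteq> ldarts D"
  shows "(case (TT \<alpha>, TT \<beta>) of (\<alpha>, \<beta>) \<Rightarrow>
           meromorphic D (\<sigma> \<circ> \<iota>) \<iota> (\<rho> \<circ> Ph) {sw x, sw x'} \<alpha> \<and>
           residue D (\<sigma> \<circ> \<iota>) \<iota> \<alpha> (sw x) = 1 \<and> residue D (\<sigma> \<circ> \<iota>) \<iota> \<alpha> (sw x') = -1 \<and>
           meromorphic D (\<sigma> \<circ> \<iota>) \<iota> (\<rho> \<circ> Ph) {sw x, sw x'} \<beta> \<and>
           residue D (\<sigma> \<circ> \<iota>) \<iota> \<beta> (sw x) = 1 \<and> residue D (\<sigma> \<circ> \<iota>) \<iota> \<beta> (sw x') = -1 \<and>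
           (\<forall>\<gamma>. is_loop D (\<sigma> \<circ> \<iota>) \<iota> \<gamma> \<and> avoids_dual \<iota> \<gamma> (map Ph lam) \<longrightarrow>
              Re (holonomy \<alpha> \<gamma>) = 0 \<and> Im (holonomy \<beta> \<gamma>) = 0))
     \<longleftrightarrow> (case (\<alpha>, \<beta>) of (\<alpha>, \<beta>) \<Rightarrow>
           meromorphic D \<sigma> \<iota> \<rho> {x, x'} \<alpha> \<and>
           residue D \<sigma> \<iota> \<alpha> x = 1 \<and> residue D \<sigma> \<iota> \<alpha> x' = -1 \<and>
           meromorphic D \<sigma> \<iota> \<rho> {x, x'} \<beta> \<and>
           residue D \<sigma> \<iota> \<beta> x = 1 \<and> residue D \<sigma> \<iota> \<beta> x' = -1 \<and>
           (\<forall>\<gamma>. is_loop D \<sigma> \<iota> \<gamma> \<and> avoids_dual \<iota> \<gamma> lam \<longrightarrow>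
              Re (holonomy \<alpha> \<gamma>) = 0 \<and> Im (holonomy \<beta> \<gamma>) = 0))"
    (is "?L \<longleftrightarrow> ?R")
proof -
  have hol: "(\<forall>\<gamma>. is_loop D (\<sigma> \<circ> \<iota>) \<iota> \<gamma> \<and> avoids_dual \<iota> \<gamma> (map Ph lam) \<longrightarrow>
              Re (holonomy (TT \<alpha>) \<gamma>) = 0 \<and> Im (holonomy (TT \<beta>) \<gamma>) = 0) \<longleftrightarrow>
        (\<forall>\<gamma>. is_loop D \<sigma> \<iota> \<gamma> \<and> avoids_dual \<iota> \<gamma> lam \<longrightarrow>
              Re (holonomy \<alpha> \<gamma>) = 0 \<and> Im (holonomy \<beta> \<gamma>) = 0)"
  proof
    assume h: "\<forall>\<gamma>. is_loop D (\<sigma> \<circ> \<iota>) \<iota> \<gamma> \<and> avoids_dual \<iota> \<gamma> (map Ph lam) \<longrightarrow>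
              Re (holonomy (TT \<alpha>) \<gamma>) = 0 \<and> Im (holonomy (TT \<beta>) \<gamma>) = 0"
    show "\<forall>\<gamma>. is_loop D \<sigma> \<iota> \<gamma> \<and> avoids_dual \<iota> \<gamma> lam \<longrightarrow> Re (holonomy \<alpha> \<gamma>) = 0 \<and> Im (holonomy \<beta> \<gamma>) = 0"
    proof (intro allI impI)
      fix \<gamma> assume g: "is_loop D \<sigma> \<iota> \<gamma> \<and> avoids_dual \<iota> \<gamma> lam"
      then have "is_loop D (\<sigma> \<circ> \<iota>) \<iota> (map Ph \<gamma>) \<and> avoids_dual \<iota> (map Ph \<gamma>) (map Ph lam)"
        using loop_T[OF cm] avoids_T[OF cm lD] by blast
      then have "Re (holonomy (TT \<alpha>) (map Ph \<gamma>)) = 0 \<and> Im (holonomy (TT \<beta>) (map Ph \<gamma>)) = 0" using h by blast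
      then show "Re (holonomy \<alpha> \<gamma>) = 0 \<and> Im (holonomy \<beta> \<gamma>) = 0" by (simp add: hol_T[OF cm])
    qed
  next
    assume h: "\<forall>\<gamma>. is_loop D \<sigma> \<iota> \<gamma> \<and> avoids_dual \<iota> \<gamma> lam \<longrightarrow> Re (holonomy \<alpha> \<gamma>) = 0 \<and> Im (holonomy \<beta> \<gamma>) = 0"
    show "\<forall>\<gamma>. is_loop D (\<sigma> \<circ> \<iota>) \<iota> \<gamma> \<and> avoids_dual \<iota> \<gamma> (map Ph lam) \<longrightarrow>
              Re (holonomy (TT \<alpha>) \<gamma>) = 0 \<and> Im (holonomy (TT \<beta>) \<gamma>) = 0"
    proof (intro allI impI)
      fix \<gamma> assume g: "is_loop D (\<sigma> \<circ> \<iota>) \<iota> \<gamma> \<and> avoids_dual \<iota> \<gamma> (map Ph lam)"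
      have e: "\<gamma> = map Ph (map Ph \<gamma>)" by (induction \<gamma>) auto
      have "is_loop D \<sigma> \<iota> (map Ph \<gamma>) \<and> avoids_dual \<iota> (map Ph \<gamma>) lam"
        using g loop_T[OF cm, of "map Ph \<gamma>"] avoids_T[OF cm lD, of "map Ph \<gamma>"] by simp
      then have "Re (holonomy \<alpha> (map Ph \<gamma>)) = 0 \<and> Im (holonomy \<beta> (map Ph \<gamma>)) = 0" using h by blast
      then show "Re (holonomy (TT \<alpha>) \<gamma>) = 0 \<and> Im (holonomy (TT \<beta>) \<gamma>) = 0"
      proof -
        have "holonomy (TT \<alpha>) \<gamma> = cnj (holonomy \<alpha> (map Ph \<gamma>))" using hol_T[OF cm, of \<alpha> "map Ph \<gamma>"] by simp
        moreover have "holonomy (TT \<beta>) \<gamma> = cnj (holonomy \<beta> (map Ph \<gamma>))" using hol_T[OF cm, of \<beta> "map Ph \<gamma>"] by simp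
        ultimately show ?thesis using \<open>Re (holonomy \<alpha> (map Ph \<gamma>)) = 0 \<and> Im (holonomy \<beta> (map Ph \<gamma>)) = 0\<close> by simp
      qed
    qed
  qed
  have res: "(residue D (\<sigma> \<circ> \<iota>) \<iota> (TT \<gamma>) (sw w) = r \<longleftrightarrow> residue D \<sigma> \<iota> \<gamma> w = r)"
    if "one_form D \<iota> \<gamma>" "r = 1 \<or> r = -1" for \<gamma> w r
    using res_T[OF cm that(1), of "sw w"] that(2) by (auto simp: cnj_eq_iff)
  show ?thesis
  proof
    assume L: ?L
    then have m: "meromorphic D \<sigma> \<iota> \<rho> {x, x'} \<alpha>" "meromorphic D \<sigma> \<iota> \<rho> {x, x'} \<beta>"
      using mero_T by auto
    then have of: "one_form D \<iota> \<alpha>" "one_form D \<iota> \<beta>" unfolding meromorphic_def by auto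
    show ?R using L m res[OF of(1)] res[OF of(2)] hol by auto
  next
    assume R: ?R
    then have m: "meromorphic D \<sigma> \<iota> \<rho> {x, x'} \<alpha>" "meromorphic D \<sigma> \<iota> \<rho> {x, x'} \<beta>" by auto
    then have of: "one_form D \<iota> \<alpha>" "one_form D \<iota> \<beta>" unfolding meromorphic_def by auto
    show ?L using R m mero_T res[OF of(1)] res[OF of(2)] hol by auto
  qed
qed

end


theorem mainTheorem9:
  fixes D :: "'d set" and \<sigma> \<iota> :: "'d \<Rightarrow> 'd" and \<rho> :: "'d ldart \<Rightarrow> real"
    and x x' :: "'d set + 'd set" and lam :: "'d ldart list"
  assumes "comb_map D \<sigma> \<iota>"
    and "conf_struct D \<iota> \<rho>"
    and "x \<in> lverts D \<sigma> \<iota>" and "x' \<in> lverts D \<sigma> \<iota>" and "x \<noteq> x'"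
    and "simple_path D \<sigma> \<iota> lam x x'"
  shows "\<exists>!ab. case ab of (\<alpha>, \<beta>) \<Rightarrow>
           meromorphic D \<sigma> \<iota> \<rho> {x, x'} \<alpha> \<and>
           residue D \<sigma> \<iota> \<alpha> x = 1 \<and> residue D \<sigma> \<iota> \<alpha> x' = -1 \<and>
           meromorphic D \<sigma> \<iota> \<rho> {x, x'} \<beta> \<and>
           residue D \<sigma> \<iota> \<beta> x = 1 \<and> residue D \<sigma> \<iota> \<beta> x' = -1 \<and>
           (\<forall>\<gamma>. is_loop D \<sigma> \<iota> \<gamma> \<and> avoids_dual \<iota> \<gamma> lam \<longrightarrow>
              Re (holonomy \<alpha> \<gamma>) = 0 \<and> Im (holonomy \<beta> \<gamma>) = 0)"
proof (cases x)
  case (Inl v0)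
  show ?thesis by (rule core_primal[OF assms Inl])
next
  case (Inr a)
  note cm = assms(1) and cs = assms(2)
  have cm': "comb_map D (\<sigma> \<circ> \<iota>) \<iota>" using cm_T[OF cm] .
  have cs': "conf_struct D \<iota> (\<rho> \<circ> Ph)" using conf_TT[OF inv'[OF cm] cs] .
  have y: "sw x \<in> lverts D (\<sigma> \<circ> \<iota>) \<iota>" using lverts_T[OF cm] assms(3) by auto
  have y': "sw x' \<in> lverts D (\<sigma> \<circ> \<iota>) \<iota>" using lverts_T[OF cm] assms(4) by auto
  have ne': "sw x \<noteq> sw x'" using assms(5) by (simp add: sw_inj)
  have sp': "simple_path D (\<sigma> \<circ> \<iota>) \<iota> (map Ph lam) (sw x) (sw x')" using simple_T[OF cm assms(6)] .
  have sx: "sw x = Inl a" using Inr by simp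
  have lD: "set lam \<subseteq> ldarts D" using assms(6) unfolding simple_path_def is_path_def by auto
  define Qn where "Qn = (\<lambda>ab. case ab of (\<alpha>, \<beta>) \<Rightarrow>
           meromorphic D (\<sigma> \<circ> \<iota>) \<iota> (\<rho> \<circ> Ph) {sw x, sw x'} \<alpha> \<and>
           residue D (\<sigma> \<circ> \<iota>) \<iota> \<alpha> (sw x) = 1 \<and> residue D (\<sigma> \<circ> \<iota>) \<iota> \<alpha> (sw x') = -1 \<and>
           meromorphic D (\<sigma> \<circ> \<iota>) \<iota> (\<rho> \<circ> Ph) {sw x, sw x'} \<beta> \<and>
           residue D (\<sigma> \<circ> \<iota>) \<iota> \<beta> (sw x) = 1 \<and> residue D (\<sigma> \<circ> \<iota>) \<iota> \<beta> (sw x') = -1 \<and>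
           (\<forall>\<gamma>. is_loop D (\<sigma> \<circ> \<iota>) \<iota> \<gamma> \<and> avoids_dual \<iota> \<gamma> (map Ph lam) \<longrightarrow>
              Re (holonomy \<alpha> \<gamma>) = 0 \<and> Im (holonomy \<beta> \<gamma>) = 0))"
  define Qo where "Qo = (\<lambda>ab. case ab of (\<alpha>, \<beta>) \<Rightarrow>
           meromorphic D \<sigma> \<iota> \<rho> {x, x'} \<alpha> \<and>
           residue D \<sigma> \<iota> \<alpha> x = 1 \<and> residue D \<sigma> \<iota> \<alpha> x' = -1 \<and>
           meromorphic D \<sigma> \<iota> \<rho> {x, x'} \<beta> \<and>
           residue D \<sigma> \<iota> \<beta> x = 1 \<and> residue D \<sigma> \<iota> \<beta> x' = -1 \<and>
           (\<forall>\<gamma>. is_loop D \<sigma> \<iota> \<gamma> \<and> avoids_dual \<iota> \<gamma> lam \<longrightarrow>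
              Re (holonomy \<alpha> \<gamma>) = 0 \<and> Im (holonomy \<beta> \<gamma>) = 0))"
  have QT: "Qn (TT \<alpha>, TT \<beta>) \<longleftrightarrow> Qo (\<alpha>, \<beta>)" for \<alpha> \<beta>
    unfolding Qn_def Qo_def by (rule Q_T[OF cm cs lD])
  have "\<exists>!ab. Qn ab" unfolding Qn_def by (rule core_primal[OF cm' cs' y y' ne' sp' sx])
  then obtain ab0 where q0: "Qn ab0" and u0: "\<And>ab. Qn ab \<Longrightarrow> ab = ab0" by blast
  obtain \<alpha>0 \<beta>0 where ab0: "ab0 = (\<alpha>0, \<beta>0)" by (cases ab0)
  have e: "Qo (TT \<alpha>0, TT \<beta>0)" using QT[of "TT \<alpha>0" "TT \<beta>0"] q0 ab0 by simp
  have u: "ab = (TT \<alpha>0, TT \<beta>0)" if "Qo ab" for ab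
  proof -
    obtain \<alpha> \<beta> where ab: "ab = (\<alpha>, \<beta>)" by (cases ab)
    have "Qn (TT \<alpha>, TT \<beta>)" using QT that ab by simp
    then have "(TT \<alpha>, TT \<beta>) = (\<alpha>0, \<beta>0)" using u0 ab0 by simp
    then have "\<alpha> = TT \<alpha>0" "\<beta> = TT \<beta>0" by (metis TT_TT prod.inject)+
    then show ?thesis using ab by simp
  qed
  have "\<exists>!ab. Qo ab" by (rule ex1I[of Qo "(TT \<alpha>0, TT \<beta>0)", OF e u])
  then show ?thesis by (simp only: Qo_def)
qed


end
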